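(* With $F\le G$ meaning that $G-F$ has all coefficients non-negative, we have $$J_1[0,1,0,0,0]\le J_1[0,0,1,0,0]\le J_1[0,0,0,1,0]\le J_1[0,0,0,0,1],$$ and consequently also $[0,1,0,0,0]\le[0,0,1,0,0]\le[0,0,0,1,0]\le[0,0,0,0,1]$.
   Context: $(x;q)_\infty=\prod_{i\ge0}(1-xq^i)$; $J_{a,m}:=(q^a;q^m)_\infty(q^{m-a};q^m)_\infty(q^m;q^m)_\infty$, $J_m:=(q^m;q^m)_\infty$, $P_i:=J_{i,11}$. $[c_1,c_2,c_3,c_4,c_5]:=\frac{J_{11}^2}{J_1^3}\big(c_1P_5^2P_4+c_2q^2P_1^2P_3+c_3qP_4^2P_1+c_4qP_2^2P_5+c_5qP_3^2P_2\big)$. *)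

theory Defs
  imports "HOL-Computational_Algebra.Formal_Power_Series"
begin

text \<open>Infinite q-Pochhammer symbol (q^a; q^m)_infinity as a formal power series in q.
  The n-th coefficient is taken from the finite product over i \<le> n; for a \<ge> 1 the
  remaining factors 1 - q^(a+m*i) with i > n do not affect coefficients of degree \<le> n,
  so this is exactly the coefficient of the infinite product.\<close>
definition qpoch :: "nat \<Rightarrow> nat \<Rightarrow> real fps" where
  "qpoch a m = Abs_fps (\<lambda>n. fps_nth (\<Prod>i\<le>n. 1 - fps_X ^ (a + m * i)) n)"

definition Jam :: "nat \<Rightarrow> nat \<Rightarrow> real fps" where
  "Jam a m = qpoch a m * qpoch (m - a) m * qpoch m m"

definition Jm :: "nat \<Rightarrow> real fps" where
  "Jm m = qpoch m m"

definition Pq :: "nat \<Rightarrow> real fps" where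
  "Pq i = Jam i 11"

definition bracket :: "real \<Rightarrow> real \<Rightarrow> real \<Rightarrow> real \<Rightarrow> real \<Rightarrow> real fps" where
  "bracket c1 c2 c3 c4 c5 =
     Jm 11 ^ 2 * inverse (Jm 1 ^ 3) *
     (fps_const c1 * Pq 5 ^ 2 * Pq 4
      + fps_const c2 * fps_X ^ 2 * Pq 1 ^ 2 * Pq 3
      + fps_const c3 * fps_X * Pq 4 ^ 2 * Pq 1
      + fps_const c4 * fps_X * Pq 2 ^ 2 * Pq 5
      + fps_const c5 * fps_X * Pq 3 ^ 2 * Pq 2)"

definition fps_coeff_le :: "real fps \<Rightarrow> real fps \<Rightarrow> bool" where
  "fps_coeff_le F G \<longleftrightarrow> (\<forall>n. fps_nth (G - F) n \<ge> 0)"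

end

theory Submission
  imports Defs
begin


definition cng :: "nat \<Rightarrow> real fps \<Rightarrow> real fps \<Rightarrow> bool" where
  "cng K F G \<longleftrightarrow> (\<forall>i<K. fps_nth F i = fps_nth G i)"

lemma cng_refl[simp]: "cng K F F" by (simp add: cng_def)
lemma cng_sym: "cng K F G \<Longrightarrow> cng K G F" by (simp add: cng_def)
lemma cng_trans: "cng K F G \<Longrightarrow> cng K G H \<Longrightarrow> cng K F H" by (simp add: cng_def)
lemma cng_mono: "cng K F G \<Longrightarrow> K' \<le> K \<Longrightarrow> cng K' F G" by (simp add: cng_def)
lemma cng_add: "cng K A B \<Longrightarrow> cng K C D \<Longrightarrow> cng K (A + C) (B + D)" by (simp add: cng_def)
lemma cng_diff: "cng K A B \<Longrightarrow> cng K C D \<Longrightarrow> cng K (A - C) (B - D)" by (simp add: cng_def)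

lemma cng_mult: assumes "cng K A B" "cng K C D" shows "cng K (A * C) (B * D)"
  unfolding cng_def
proof (intro allI impI)
  fix n assume n: "n < K"
  show "fps_nth (A * C) n = fps_nth (B * D) n"
    unfolding fps_mult_nth
    by (rule sum.cong) (use assms n in \<open>auto simp: cng_def\<close>)
qed

lemma cng_inverse: assumes "cng K A B" "fps_nth A 0 \<noteq> 0" shows "cng K (inverse A) (inverse B)"
proof (cases "K = 0")
  case True then show ?thesis by (simp add: cng_def)
next
  case False
  then have B0: "fps_nth B 0 \<noteq> 0" using assms by (auto simp: cng_def)
  have c: "cng K (inverse A * inverse B * B) (inverse A * inverse B * A)"
    by (rule cng_mult) (use assms in \<open>auto intro: cng_sym\<close>)
  have iA: "inverse A * A = 1" by (rule inverse_mult_eq_1[OF assms(2)])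
  have iB: "inverse B * B = 1" by (rule inverse_mult_eq_1[OF B0])
  have e1: "inverse A * inverse B * B = inverse A" by (simp only: mult.assoc iB mult_1_right)
  have e2: "inverse A * inverse B * A = inverse B"
  proof -
    have "inverse A * inverse B * A = inverse B * (inverse A * A)" by (simp only: mult_ac)
    then show ?thesis by (simp only: iA mult_1_right)
  qed
  show ?thesis using c unfolding e1 e2 .
qed

definition nn :: "real fps \<Rightarrow> bool" where "nn F \<longleftrightarrow> (\<forall>n. 0 \<le> fps_nth F n)"

lemma nn_mult: "nn A \<Longrightarrow> nn B \<Longrightarrow> nn (A * B)"
  unfolding nn_def fps_mult_nth by (auto intro!: sum_nonneg)
lemma nn_add: "nn A \<Longrightarrow> nn B \<Longrightarrow> nn (A + B)"
  unfolding nn_def by auto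
lemma nn_1[simp]: "nn 1" unfolding nn_def by (simp add: fps_one_nth)
lemma nn_X[simp]: "nn fps_X" unfolding nn_def by (simp add: fps_X_def)
lemma nn_pow: "nn A \<Longrightarrow> nn (A ^ n)" by (induction n) (auto intro: nn_mult)
lemma nn_prod: "(\<And>i. i \<in> S \<Longrightarrow> nn (f i)) \<Longrightarrow> nn (\<Prod>i\<in>S. f i)"
  by (induction S rule: infinite_finite_induct) (auto intro: nn_mult)

definition good :: "(nat \<Rightarrow> real fps) \<Rightarrow> bool" where
  "good f \<longleftrightarrow> (\<forall>i. cng (Suc i) (f i) 1)"

definition ip :: "(nat \<Rightarrow> real fps) \<Rightarrow> real fps" where
  "ip f = Abs_fps (\<lambda>n. fps_nth (\<Prod>i<Suc n. f i) n)"

lemma cng_prod_one: "(\<And>i. i \<in> S \<Longrightarrow> cng K (f i) 1) \<Longrightarrow> cng K (\<Prod>i\<in>S. f i) 1"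
proof (induction S rule: infinite_finite_induct)
  case (insert x F)
  then have "cng K (f x * prod f F) (1 * 1)" by (intro cng_mult) auto
  then show ?case using insert by simp
qed auto

lemma good_prod: assumes "good f" "n \<le> N"
  shows "cng (Suc n) (\<Prod>i<N. f i) (\<Prod>i<n. f i)"
proof -
  have "{..<N} = {..<n} \<union> {n..<N}" using assms(2) by auto
  then have "(\<Prod>i<N. f i) = (\<Prod>i<n. f i) * (\<Prod>i\<in>{n..<N}. f i)"
    by (simp add: prod.union_disjoint ivl_disj_int)
  moreover have "cng (Suc n) (\<Prod>i\<in>{n..<N}. f i) 1"
    by (rule cng_prod_one) (use assms(1) in \<open>auto simp: good_def intro: cng_mono\<close>)
  ultimately show ?thesis using cng_mult[OF cng_refl[of "Suc n" "\<Prod>i<n. f i"]] by fastforce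
qed

lemma ip_cng: assumes "good f" "n \<le> N" shows "cng (Suc n) (ip f) (\<Prod>i<N. f i)"
  unfolding cng_def
proof (intro allI impI)
  fix k assume k: "k < Suc n"
  have "cng (Suc k) (\<Prod>i<N. f i) (\<Prod>i<k. f i)" using good_prod[OF assms(1), of k N] k assms by simp
  moreover have "cng (Suc k) (\<Prod>i<Suc k. f i) (\<Prod>i<k. f i)" using good_prod[OF assms(1), of k "Suc k"] by simp
  ultimately show "fps_nth (ip f) k = fps_nth (\<Prod>i<N. f i) k"
    by (simp add: ip_def cng_def)
qed

lemma ip_eqI: assumes "good f" "\<And>n. \<exists>N\<ge>n. cng (Suc n) F (\<Prod>i<N. f i)" shows "ip f = F"
proof (rule fps_ext)
  fix n
  obtain N where "N \<ge> n" "cng (Suc n) F (\<Prod>i<N. f i)" using assms(2) by blast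
  with ip_cng[OF assms(1) this(1)] show "fps_nth (ip f) n = fps_nth F n" by (auto simp: cng_def)
qed

lemma good_mult: "good f \<Longrightarrow> good g \<Longrightarrow> good (\<lambda>i. f i * g i)"
  unfolding good_def using cng_mult by fastforce

lemma good_inverse: assumes "good f" shows "good (\<lambda>i. inverse (f i))"
  unfolding good_def
proof
  fix i
  have c: "cng (Suc i) (f i) 1" using assms by (simp add: good_def)
  then have "fps_nth (f i) 0 = 1" by (auto simp: cng_def)
  then have "cng (Suc i) (inverse (f i)) (inverse 1)" using cng_inverse[OF c] by simp
  then show "cng (Suc i) (inverse (f i)) 1" by simp
qed

lemma good_one: assumes "\<And>i. e i > i" shows "good (\<lambda>i. 1 - fps_X ^ e i)"
  unfolding good_def cng_def
proof (intro allI impI)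
  fix i j assume "j < Suc i"
  then have "j \<noteq> e i" using assms[of i] by linarith
  then show "fps_nth (1 - fps_X ^ e i :: real fps) j = fps_nth 1 j" by (cases "j = 0") (simp_all add: fps_X_power_nth)
qed

lemma ip_mult: assumes "good f" "good g" shows "ip f * ip g = ip (\<lambda>i. f i * g i)"
proof (rule sym, rule ip_eqI[OF good_mult[OF assms]])
  fix n
  have "cng (Suc n) (ip f * ip g) ((\<Prod>i<n. f i) * (\<Prod>i<n. g i))"
    by (intro cng_mult ip_cng assms) auto
  then show "\<exists>N\<ge>n. cng (Suc n) (ip f * ip g) (\<Prod>i<N. f i * g i)"
    by (auto simp: prod.distrib)
qed

lemma ip_one: "ip (\<lambda>i. 1) = 1"
  by (rule ip_eqI) (auto simp: good_def)

lemma ip0: assumes "good f" shows "fps_nth (ip f) 0 = 1"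
proof -
  have "cng 1 (ip f) (\<Prod>i<0. f i)" using ip_cng[OF assms, of 0 0] by simp
  then show ?thesis by (simp add: cng_def)
qed

lemma ip_inverse: assumes "good f" shows "inverse (ip f) = ip (\<lambda>i. inverse (f i))"
proof -
  have f0: "\<And>i. fps_nth (f i) 0 = 1" using assms by (auto simp: good_def cng_def)
  have "ip (\<lambda>i. inverse (f i)) * ip f = ip (\<lambda>i. inverse (f i) * f i)"
    by (rule ip_mult[OF good_inverse[OF assms] assms])
  also have "\<dots> = 1" using f0 by (simp add: inverse_mult_eq_1 ip_one)
  finally have e: "ip (\<lambda>i. inverse (f i)) * ip f = 1" .
  have "inverse (ip f) = ip (\<lambda>i. inverse (f i)) * ip f * inverse (ip f)" using e by simp
  also have "\<dots> = ip (\<lambda>i. inverse (f i))" using ip0[OF assms]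
    by (simp add: mult.assoc mult.commute[of "ip f"] inverse_mult_eq_1)
  finally show ?thesis .
qed

lemma ip_nn: assumes "\<And>i. nn (f i)" shows "nn (ip f)"
  unfolding nn_def
proof
  fix n
  have "nn (\<Prod>i<Suc n. f i)" by (rule nn_prod) (use assms in auto)
  then show "0 \<le> fps_nth (ip f) n" by (simp add: ip_def nn_def)
qed

lemma ip_shift: assumes "good f" shows "ip f = f 0 * ip (\<lambda>i. f (Suc i))"
proof -
  have g: "good (\<lambda>i. f (Suc i))" using assms unfolding good_def by (auto intro: cng_mono)
  show ?thesis
  proof (rule ip_eqI[OF assms])
    fix n
    have "cng (Suc n) (f 0 * ip (\<lambda>i. f (Suc i))) (f 0 * (\<Prod>i<n. f (Suc i)))"
      by (intro cng_mult ip_cng g) auto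
    moreover have "f 0 * (\<Prod>i<n. f (Suc i)) = (\<Prod>i<Suc n. f i)"
      by (rule prod.lessThan_Suc_shift[symmetric])
    ultimately show "\<exists>N\<ge>n. cng (Suc n) (f 0 * ip (\<lambda>i. f (Suc i))) (\<Prod>i<N. f i)"
      by (intro exI[of _ "Suc n"]) auto
  qed
qed




lemma cng_prod: "(\<And>i. i \<in> S \<Longrightarrow> cng K (f i) (g i)) \<Longrightarrow> cng K (\<Prod>i\<in>S. f i) (\<Prod>i\<in>S. g i)"
proof (induction S rule: infinite_finite_induct)
  case (insert x F)
  then show ?case by (simp add: cng_mult)
qed auto

lemma qpoch_ip: "qpoch a m = ip (\<lambda>i. 1 - fps_X ^ (a + m * i))"
  unfolding qpoch_def ip_def by (simp add: lessThan_Suc_atMost)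

lemma good_qp: "a \<ge> 1 \<Longrightarrow> m \<ge> 1 \<Longrightarrow> good (\<lambda>i. 1 - fps_X ^ (a + m * i))"
proof (rule good_one)
  fix i assume "a \<ge> 1" "m \<ge> 1"
  then have "m * i \<ge> i" by simp
  then show "i < a + m * i" using \<open>a \<ge> 1\<close> by linarith
qed

lemma good_sub: assumes "good f" "\<And>k. g k \<ge> k" shows "good (\<lambda>k. f (g k))"
  using assms unfolding good_def by (auto intro: cng_mono)

lemma prod_interleave: fixes M N :: nat assumes "M > 0"
  shows "(\<Prod>i<M * N. f i) = (\<Prod>r<M. \<Prod>k<N. f (M * k + r))"
proof -
  have "(\<Prod>r<M. \<Prod>k<N. f (M * k + r)) = (\<Prod>(r,k)\<in>{..<M} \<times> {..<N}. f (M * k + r))"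
    by (rule prod.cartesian_product)
  also have "\<dots> = (\<Prod>i<M * N. f i)"
  proof (rule prod.reindex_bij_witness[where j = "\<lambda>(r,k). M * k + r" and i = "\<lambda>i. (i mod M, i div M)"])
    fix b assume "b \<in> {..<M} \<times> {..<N}"
    then obtain r k where b: "b = (r,k)" "r < M" "k < N" by auto
    then have "M * k + r < M * (k + 1)" by simp
    also have "\<dots> \<le> M * N" using b by (intro mult_le_mono2) simp
    finally show "(case b of (r, k) \<Rightarrow> M * k + r) \<in> {..<M * N}" using b by simp
  qed (use assms in \<open>auto simp: less_mult_imp_div_less mult.commute\<close>)
  finally show ?thesis by simp
qed

lemma ip_interleave: assumes "good f" "M > 0"
  shows "ip f = (\<Prod>r<M. ip (\<lambda>k. f (M * k + r)))"
proof (rule ip_eqI[OF assms(1)])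
  fix n
  have g: "\<And>r. good (\<lambda>k. f (M * k + r))"
    by (rule good_sub[OF assms(1)]) (use assms(2) in \<open>simp add: trans_le_add1\<close>)
  have "cng (Suc n) (\<Prod>r<M. ip (\<lambda>k. f (M * k + r))) (\<Prod>i<M * Suc n. f i)"
    unfolding prod_interleave[OF assms(2)] by (intro cng_prod ip_cng g) auto
  moreover have "M * Suc n \<ge> n" using assms(2) by (simp add: trans_le_add2)
  ultimately show "\<exists>N\<ge>n. cng (Suc n) (\<Prod>r<M. ip (\<lambda>k. f (M * k + r))) (\<Prod>i<N. f i)" by blast
qed

lemma inv_geo: assumes "x \<ge> 1"
  shows "inverse (1 - fps_X ^ x :: real fps) = Abs_fps (\<lambda>n. if x dvd n then 1 else 0)"
proof (rule fps_inverse_unique, rule fps_ext)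
  fix n
  let ?A = "Abs_fps (\<lambda>n. if x dvd n then 1 else 0) :: real fps"
  have "(1 - fps_X ^ x) * ?A = ?A - fps_X ^ x * ?A" by (simp add: algebra_simps)
  then have "fps_nth ((1 - fps_X ^ x) * ?A) n = fps_nth ?A n - (if n < x then 0 else fps_nth ?A (n - x))"
    by (simp add: fps_X_power_mult_nth)
  also have "\<dots> = fps_nth 1 n"
  proof (cases "n < x")
    case True
    then have "x dvd n \<longleftrightarrow> n = 0" using assms by (auto dest: dvd_imp_le)
    then show ?thesis using True by auto
  next
    case False
    then have "x dvd n \<longleftrightarrow> x dvd (n - x)" using assms by (simp add: dvd_minus_self)
    then show ?thesis using False assms by auto
  qed
  finally show "fps_nth ((1 - fps_X ^ x) * ?A) n = fps_nth 1 n" .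
qed

lemma nn_inv_geo: "x \<ge> 1 \<Longrightarrow> nn (inverse (1 - fps_X ^ x :: real fps))"
  by (simp add: inv_geo nn_def)

lemma u0: "x \<ge> 1 \<Longrightarrow> fps_nth (1 - fps_X ^ x :: real fps) 0 = 1"
  by (simp add: fps_X_power_nth)

lemma u_inv: "x \<ge> 1 \<Longrightarrow> (1 - fps_X ^ x :: real fps) * inverse (1 - fps_X ^ x) = 1"
  by (rule inverse_mult_eq_1') (simp add: u0)

lemma nn_ratio: assumes "x \<ge> 1" "y \<ge> 1"
  shows "nn ((1 - fps_X ^ (x + y) :: real fps) * inverse (1 - fps_X ^ x) * inverse (1 - fps_X ^ y))"
proof -
  let ?u = "1 - fps_X ^ x :: real fps" and ?v = "1 - fps_X ^ y :: real fps"
  have e: "(1 - fps_X ^ (x + y) :: real fps) = ?u + fps_X ^ x * ?v" by (simp add: algebra_simps power_add)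
  have "(1 - fps_X ^ (x + y)) * inverse ?u * inverse ?v
      = inverse ?v * (?u * inverse ?u) + fps_X ^ x * inverse ?u * (?v * inverse ?v)"
    unfolding e by (simp add: algebra_simps)
  also have "\<dots> = inverse ?v + fps_X ^ x * inverse ?u" using u_inv assms by simp
  finally show ?thesis
    using assms by (auto intro!: nn_add nn_mult nn_pow nn_inv_geo)
qed




abbreviation R :: "nat \<Rightarrow> real fps" where "R a \<equiv> qpoch a 11"

definition Jo :: "real fps" where "Jo = ip (\<lambda>k. 1 - fps_X ^ (11 + 22 * k))"
definition Je :: "real fps" where "Je = ip (\<lambda>k. 1 - fps_X ^ (22 + 22 * k))"

lemma J11_split: "qpoch 11 11 = Jo * Je"
proof -
  have "qpoch 11 11 = (\<Prod>r<2. ip (\<lambda>k. 1 - fps_X ^ (11 + 11 * (2 * k + r))))"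
    unfolding qpoch_ip by (rule ip_interleave[OF good_qp]) auto
  also have "\<dots> = Jo * Je"
    by (simp add: Jo_def Je_def numeral_2_eq_2 algebra_simps)
  finally show ?thesis .
qed

lemma J1_split: "qpoch 1 1 = R 1 * R 2 * R 3 * R 4 * R 5 * R 6 * R 7 * R 8 * R 9 * R 10 * R 11"
proof -
  have "qpoch 1 1 = (\<Prod>r<11. ip (\<lambda>k. 1 - fps_X ^ (1 + 1 * (11 * k + r))))"
    unfolding qpoch_ip by (rule ip_interleave[OF good_qp]) auto
  also have "\<dots> = (\<Prod>r<11. R (Suc r))"
    by (rule prod.cong) (auto simp: qpoch_ip algebra_simps)
  also have "\<dots> = R 1 * R 2 * R 3 * R 4 * R 5 * R 6 * R 7 * R 8 * R 9 * R 10 * R 11"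
    by (simp add: eval_nat_numeral mult_ac)
  finally show ?thesis .
qed

lemma good_R: "a \<ge> 1 \<Longrightarrow> good (\<lambda>i. 1 - fps_X ^ (a + 11 * i))"
  by (rule good_qp) auto

lemma nn_inv_R: assumes "a \<ge> 1" shows "nn (inverse (R a))"
  unfolding qpoch_ip ip_inverse[OF good_R[OF assms]]
  by (rule ip_nn) (use assms in \<open>auto intro: nn_inv_geo\<close>)

lemma chain_odd: assumes "a \<ge> 1" "b \<ge> 1" "a + b = 11"
  shows "nn (Jo * inverse (R a) * inverse (R b))"
proof -
  have g1: "good (\<lambda>k. 1 - fps_X ^ (11 + 22 * k))" by (rule good_one) auto
  have "Jo * inverse (R a) * inverse (R b)
     = ip (\<lambda>k. (1 - fps_X ^ (11 + 22 * k)) * inverse (1 - fps_X ^ (a + 11 * k)) * inverse (1 - fps_X ^ (b + 11 * k)))"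
  proof -
    have ga: "good (\<lambda>i. inverse (1 - fps_X ^ (a + 11 * i)))" by (rule good_inverse[OF good_R]) (use assms in auto)
    have gb: "good (\<lambda>i. inverse (1 - fps_X ^ (b + 11 * i)))" by (rule good_inverse[OF good_R]) (use assms in auto)
    show ?thesis
      unfolding Jo_def qpoch_ip ip_inverse[OF good_R[OF assms(1)]] ip_inverse[OF good_R[OF assms(2)]]
      by (simp only: ip_mult[OF g1 ga] ip_mult[OF good_mult[OF g1 ga] gb])
  qed
  also have "nn \<dots>"
  proof (rule ip_nn)
    fix k
    have e: "11 + 22 * k = (a + 11 * k) + (b + 11 * k)" using assms by simp
    show "nn ((1 - fps_X ^ (11 + 22 * k)) * inverse (1 - fps_X ^ (a + 11 * k)) * inverse (1 - fps_X ^ (b + 11 * k)))"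
      unfolding e by (rule nn_ratio) (use assms in auto)
  qed
  finally show ?thesis .
qed

lemma chain_even: assumes "a \<ge> 1" "b \<ge> 1" "a + b = 11"
  shows "nn (Je * inverse (R a) * inverse (R b))"
proof -
  have g1: "good (\<lambda>k. 1 - fps_X ^ (22 + 22 * k))" by (rule good_one) auto
  have g2: "good (\<lambda>k. 1 - fps_X ^ (a + 11 * Suc k))" by (rule good_one) (use assms in auto)
  have sh: "R a = (1 - fps_X ^ a) * ip (\<lambda>k. 1 - fps_X ^ (a + 11 * Suc k))"
    unfolding qpoch_ip by (subst ip_shift[OF good_R[OF assms(1)]]) simp
  have u: "fps_nth (1 - fps_X ^ a :: real fps) 0 \<noteq> 0" using u0 assms by simp
  have "Je * inverse (R a) * inverse (R b)
     = inverse (1 - fps_X ^ a) * ip (\<lambda>k. (1 - fps_X ^ (22 + 22 * k)) * inverse (1 - fps_X ^ (a + 11 * Suc k)) * inverse (1 - fps_X ^ (b + 11 * k)))"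
  proof -
    have ga: "good (\<lambda>i. inverse (1 - fps_X ^ (a + 11 * Suc i)))" by (rule good_inverse[OF g2])
    have gb: "good (\<lambda>i. inverse (1 - fps_X ^ (b + 11 * i)))" by (rule good_inverse[OF good_R]) (use assms in auto)
    have "Je * inverse (R a) * inverse (R b) = inverse (1 - fps_X ^ a) * (Je * inverse (ip (\<lambda>k. 1 - fps_X ^ (a + 11 * Suc k))) * inverse (R b))"
      unfolding sh fps_inverse_mult by (simp add: mult_ac)
    also have "\<dots> = inverse (1 - fps_X ^ a) * ip (\<lambda>k. (1 - fps_X ^ (22 + 22 * k)) * inverse (1 - fps_X ^ (a + 11 * Suc k)) * inverse (1 - fps_X ^ (b + 11 * k)))"
      unfolding Je_def qpoch_ip ip_inverse[OF g2] ip_inverse[OF good_R[OF assms(2)]]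
      by (simp only: ip_mult[OF g1 ga] ip_mult[OF good_mult[OF g1 ga] gb])
    finally show ?thesis .
  qed
  also have "nn \<dots>"
  proof (rule nn_mult[OF nn_inv_geo], use assms in simp, rule ip_nn)
    fix k
    have e: "22 + 22 * k = (a + 11 * Suc k) + (b + 11 * k)" using assms by simp
    show "nn ((1 - fps_X ^ (22 + 22 * k)) * inverse (1 - fps_X ^ (a + 11 * Suc k)) * inverse (1 - fps_X ^ (b + 11 * k)))"
      unfolding e by (rule nn_ratio) (use assms in auto)
  qed
  finally show ?thesis .
qed

lemma R0: "a \<ge> 1 \<Longrightarrow> fps_nth (R a) 0 = 1"
  unfolding qpoch_ip by (rule ip0[OF good_R])




fun qb :: "'a::comm_ring_1 \<Rightarrow> nat \<Rightarrow> nat \<Rightarrow> 'a" where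
  "qb p n 0 = 1"
| "qb p 0 (Suc k) = 0"
| "qb p (Suc n) (Suc k) = qb p n k + p ^ Suc k * qb p n (Suc k)"

lemma qb_zero: "n < k \<Longrightarrow> qb p n k = 0"
proof (induction n arbitrary: k)
  case 0 then show ?case by (cases k) auto
next
  case (Suc n) then show ?case by (cases k) auto
qed

definition tri :: "nat \<Rightarrow> nat" where "tri j = j * (j - 1) div 2"

lemma tri_Suc: "tri (Suc j) = tri j + j"
proof -
  have "even (j * (j - 1))" by (cases j) auto
  then show ?thesis unfolding tri_def by (cases j) (auto elim!: evenE simp: algebra_simps)
qed

lemma qbin_ext: "(\<Prod>i<n. x + y * p ^ i) = (\<Sum>j\<le>M. qb p n j * p ^ tri j * y ^ j * x ^ (n - j))"
  if "n \<le> M" for x y p :: "'a::comm_ring_1"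
  using that
proof (induction n arbitrary: y M)
  case 0
  have "(\<Sum>j\<le>M. qb p 0 j * p ^ tri j * y ^ j * x ^ (0 - j)) = (\<Sum>j\<in>{0}. qb p 0 j * p ^ tri j * y ^ j * x ^ (0 - j))"
    by (rule sum.mono_neutral_right) (auto simp: qb_zero)
  then show ?case by (simp add: tri_def)
next
  case (Suc n)
  then obtain M' where M: "M = Suc M'" "n \<le> M'" by (cases M) auto
  have "(\<Prod>i<Suc n. x + y * p ^ i) = (x + y) * (\<Prod>i<n. x + (y * p) * p ^ i)"
    unfolding prod.lessThan_Suc_shift by (simp add: mult.assoc)
  also have "\<dots> = (x + y) * (\<Sum>j\<le>M'. qb p n j * p ^ tri j * (y * p) ^ j * x ^ (n - j))"
    using Suc.IH[OF M(2)] by simp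
  also have "\<dots> = (\<Sum>j\<le>M'. qb p n j * p ^ tri (Suc j) * y ^ j * x ^ (Suc n - j)) +
                  (\<Sum>j\<le>M'. qb p n j * p ^ tri (Suc j) * y ^ Suc j * x ^ (n - j))"
  proof -
    have f1: "\<And>j. j \<le> M' \<Longrightarrow> x * (qb p n j * p ^ tri j * (y * p) ^ j * x ^ (n - j)) = qb p n j * p ^ tri (Suc j) * y ^ j * x ^ (Suc n - j)"
    proof -
      fix j assume "j \<le> M'"
      show "x * (qb p n j * p ^ tri j * (y * p) ^ j * x ^ (n - j)) = qb p n j * p ^ tri (Suc j) * y ^ j * x ^ (Suc n - j)"
      proof (cases "j \<le> n")
        case True
        then have "x ^ (Suc n - j) = x * x ^ (n - j)" by (simp add: Suc_diff_le)
        then show ?thesis by (simp add: tri_Suc power_add power_mult_distrib algebra_simps)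
      next
        case False then show ?thesis by (simp add: qb_zero)
      qed
    qed
    have f2: "\<And>j. y * (qb p n j * p ^ tri j * (y * p) ^ j * x ^ (n - j)) = qb p n j * p ^ tri (Suc j) * y ^ Suc j * x ^ (n - j)"
      by (simp add: tri_Suc power_add power_mult_distrib algebra_simps)
    let ?S = "\<Sum>j\<le>M'. qb p n j * p ^ tri j * (y * p) ^ j * x ^ (n - j)"
    have h1: "x * ?S = (\<Sum>j\<le>M'. qb p n j * p ^ tri (Suc j) * y ^ j * x ^ (Suc n - j))"
      unfolding sum_distrib_left by (rule sum.cong) (simp_all add: f1)
    have h2: "y * ?S = (\<Sum>j\<le>M'. qb p n j * p ^ tri (Suc j) * y ^ Suc j * x ^ (n - j))"
      unfolding sum_distrib_left by (rule sum.cong) (simp_all only: f2)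
    show ?thesis unfolding distrib_right h1 h2 by (rule refl)
  qed
  also have "\<dots> = (\<Sum>j\<le>M. qb p (Suc n) j * p ^ tri j * y ^ j * x ^ (Suc n - j))"
  proof -
    have s1: "(\<Sum>j\<le>M'. qb p n j * p ^ tri (Suc j) * y ^ Suc j * x ^ (n - j))
        = (\<Sum>j\<le>M'. qb p n j * p ^ tri (Suc j) * y ^ Suc j * x ^ (Suc n - Suc j))" by simp
    have s0: "(\<Sum>j\<le>M'. qb p n j * p ^ tri (Suc j) * y ^ j * x ^ (Suc n - j))
        = x ^ Suc n + (\<Sum>j\<le>M'. p ^ Suc j * qb p n (Suc j) * p ^ tri (Suc j) * y ^ Suc j * x ^ (Suc n - Suc j))"
    proof -
      have "(\<Sum>j\<le>M'. qb p n j * p ^ tri (Suc j) * y ^ j * x ^ (Suc n - j))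
          = (\<Sum>j\<le>Suc M'. qb p n j * p ^ tri (Suc j) * y ^ j * x ^ (Suc n - j))"
        using M by (simp add: qb_zero)
      also have "\<dots> = x ^ Suc n + (\<Sum>j\<le>M'. qb p n (Suc j) * p ^ tri (Suc (Suc j)) * y ^ Suc j * x ^ (Suc n - Suc j))"
        by (subst sum.atMost_Suc_shift) (simp add: tri_def)
      also have "(\<Sum>j\<le>M'. qb p n (Suc j) * p ^ tri (Suc (Suc j)) * y ^ Suc j * x ^ (Suc n - Suc j))
          = (\<Sum>j\<le>M'. p ^ Suc j * qb p n (Suc j) * p ^ tri (Suc j) * y ^ Suc j * x ^ (Suc n - Suc j))"
        by (rule sum.cong) (simp_all add: tri_Suc[of "Suc _"] power_add algebra_simps)
      finally show ?thesis .
    qed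
    show ?thesis unfolding M s0
      by (subst sum.atMost_Suc_shift) (simp add: sum.distrib[symmetric] algebra_simps tri_def)
  qed
  finally show ?case .
qed

lemma qbin: "(\<Prod>i<n. x + y * p ^ i) = (\<Sum>j\<le>n. qb p n j * p ^ tri j * y ^ j * x ^ (n - j))"
  for x y p :: "'a::comm_ring_1"
  by (rule qbin_ext) simp

definition pp :: "'a::comm_ring_1 \<Rightarrow> nat \<Rightarrow> 'a" where "pp p r = (\<Prod>i<r. 1 - p ^ Suc i)"

lemma qb_pp: "k \<le> n \<Longrightarrow> qb p n k * pp p k * pp p (n - k) = pp p n"
proof (induction n arbitrary: k)
  case 0 then show ?case by (simp add: pp_def)
next
  case (Suc n)
  show ?case
  proof (cases k)
    case 0 then show ?thesis by (simp add: pp_def)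
  next
    case (Suc k')
    then have k': "k' \<le> n" using Suc.prems by simp
    have A: "qb p n k' * pp p k' * pp p (n - k') = pp p n" by (rule Suc.IH[OF k'])
    have ppS: "\<And>r. pp p (Suc r) = pp p r * (1 - p ^ Suc r)" by (simp add: pp_def)
    show ?thesis
    proof (cases "k' = n")
      case True
      have "qb p (Suc n) k * pp p k * pp p (Suc n - k) = qb p n n * pp p (Suc n) * pp p 0"
        using Suc True by (simp add: qb_zero)
      also have "\<dots> = (qb p n n * pp p n * pp p 0) * (1 - p ^ Suc n)" by (simp only: ppS mult_ac)
      also have "\<dots> = pp p (Suc n)" using A True by (simp add: ppS)
      finally show ?thesis .
    next
      case False
      then have k2: "Suc k' \<le> n" using k' by simp
      have B: "qb p n (Suc k') * pp p (Suc k') * pp p (n - Suc k') = pp p n" by (rule Suc.IH[OF k2])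
      have e1: "n - k' = Suc (n - Suc k')" using k2 by simp
      have "qb p (Suc n) k * pp p k * pp p (Suc n - k)
          = (qb p n k' + p ^ Suc k' * qb p n (Suc k')) * pp p (Suc k') * pp p (n - k')"
        using Suc by simp
      also have "\<dots> = (qb p n k' * pp p k' * pp p (n - k')) * (1 - p ^ Suc k')
          + p ^ Suc k' * (qb p n (Suc k') * pp p (Suc k') * pp p (n - Suc k')) * (1 - p ^ (n - k'))"
        unfolding ppS e1 by (simp add: algebra_simps)
      also have "\<dots> = pp p n * (1 - p ^ Suc k') + pp p n * (p ^ Suc k' - p ^ Suc k' * p ^ (n - k'))"
        unfolding A B by (simp add: algebra_simps)
      also have "\<dots> = pp p n * (1 - p ^ Suc n)"
      proof -
        have ee: "Suc k' + (n - k') = Suc n" using k2 by simp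
        have pk: "p ^ Suc k' * p ^ (n - k') = p ^ Suc n" by (simp only: power_add[symmetric] ee)
        show ?thesis unfolding pk by (simp add: algebra_simps)
      qed
      also have "\<dots> = pp p (Suc n)" by (simp add: ppS)
      finally show ?thesis .
    qed
  qed
qed




definition sg :: "int \<Rightarrow> real" where "sg k = (if even k then 1 else -1)"
definition ee :: "nat \<Rightarrow> nat \<Rightarrow> int \<Rightarrow> int" where "ee m a k = int m * (k * (k - 1) div 2) + int a * k"

lemma even_kk: "even (k * (k - 1 :: int))" by auto

lemma ee2: "2 * ee m a k = int m * (k * (k - 1)) + 2 * int a * k"
proof -
  have "k * (k - 1) = 2 * (k * (k - 1) div 2)" using even_kk[of k] by simp
  then show ?thesis unfolding ee_def by (simp add: algebra_simps)
qed

lemma ee_bound: assumes "1 \<le> a" "a < m" shows "ee m a k \<ge> \<bar>k\<bar>"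
proof (cases "k \<ge> 1")
  case True
  have "k * (k - 1) \<ge> 0" using True by simp
  then have "int m * (k * (k - 1)) \<ge> 0" by simp
  moreover have "2 * int a * k \<ge> 2 * k" using assms True by simp
  ultimately have "2 * ee m a k \<ge> 2 * k" unfolding ee2 by linarith
  then show ?thesis using True by simp
next
  case False
  define t where "t = - k"
  have t: "t \<ge> 0" "k = - t" using False by (auto simp: t_def)
  have kk: "k * (k - 1) = t * (t + 1)" using t by (simp add: algebra_simps)
  have "t * (t + 1) \<ge> 2 * t" using t by (cases "t = 0") (auto simp: algebra_simps intro: mult_left_mono[of 1 t t, simplified])
  then have "int m * (t * (t + 1)) \<ge> int m * (2 * t)" by (intro mult_left_mono) auto
  moreover have "int m * (2 * t) \<ge> 2 * int a * t + 2 * t"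
  proof -
    have "int m \<ge> int a + 1" using assms by simp
    then have "int m * (2 * t) \<ge> (int a + 1) * (2 * t)" using t by (intro mult_right_mono) auto
    then show ?thesis by (simp add: algebra_simps)
  qed
  ultimately have "2 * ee m a k \<ge> 2 * t" unfolding ee2 kk using t by (simp add: algebra_simps)
  then show ?thesis using t by simp
qed

lemma ee_nonneg: "1 \<le> a \<Longrightarrow> a < m \<Longrightarrow> ee m a k \<ge> 0"
  using ee_bound[of a m k] by linarith

lemma sum_tri: "(\<Sum>i<n. i) = tri n"
proof (induction n)
  case 0 then show ?case by (simp add: tri_def)
next
  case (Suc n) then show ?case by (simp add: tri_Suc)
qed

lemma sg_pow: "(-1::real) ^ j = (-1) ^ n * sg (int j - int n)"
proof -
  have "even (int j - int n) \<longleftrightarrow> even (j + n)" by (simp add: even_add)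
  then show ?thesis unfolding sg_def by (auto simp: minus_one_power_iff)
qed

lemma prod_shift_n: "(\<Prod>i\<in>{n..<2*n}. f i) = (\<Prod>i<n. f (n + i))" for n :: nat
  by (rule prod.reindex_bij_witness[where j = "\<lambda>i. i - n" and i = "\<lambda>i. n + i"]) auto

lemma exp_id: assumes "j \<le> 2 * n" "a \<le> m * n" "1 \<le> a" "a < m"
  shows "m * tri j + (m * n - a) * (2 * n - j) = (m * tri n + n * (m * n - a)) + nat (ee m a (int j - int n))"
proof -
  have t: "\<And>r. 2 * int (tri r) = int r * (int r - 1)"
  proof -
    fix r :: nat
    have "even (r * (r - 1))" by (cases r) auto
    then have "2 * tri r = r * (r - 1)" unfolding tri_def by simp
    then show "2 * int (tri r) = int r * (int r - 1)" by (cases r) (auto simp: algebra_simps of_nat_mult[symmetric] simp del: of_nat_mult)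
  qed
  have e0: "ee m a (int j - int n) \<ge> 0" by (rule ee_nonneg) (use assms in auto)
  obtain d0 where d0: "m * n = a + d0" using le_Suc_ex[OF assms(2)] by blast
  define d where "d = d0"
  have d: "m * n = d + a" using d0 unfolding d_def by simp
  obtain e where e: "2 * n = j + e" using assms(1) le_Suc_ex by blast
  have dd: "m * n - a = d" "2 * n - j = e" using d e by auto
  have di: "int d = int m * int n - int a" using d by (simp add: algebra_simps of_nat_mult[symmetric] del: of_nat_mult)
  have ei: "int e = 2 * int n - int j" using e by (simp add: algebra_simps of_nat_mult[symmetric] del: of_nat_mult)
  have "2 * int (m * tri j + d * e) = 2 * int (m * tri n + n * d) + 2 * ee m a (int j - int n)"
  proof -
    have "2 * int (m * tri j + d * e) = int m * (2 * int (tri j)) + 2 * int d * int e" by (simp add: algebra_simps)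
    also have "\<dots> = int m * (int j * (int j - 1)) + 2 * (int m * int n - int a) * (2 * int n - int j)"
      unfolding t di ei ..
    also have "\<dots> = int m * (int n * (int n - 1)) + 2 * int n * (int m * int n - int a)
        + (int m * ((int j - int n) * (int j - int n - 1)) + 2 * int a * (int j - int n))"
      by (simp add: algebra_simps)
    also have "\<dots> = int m * (2 * int (tri n)) + 2 * int n * int d + 2 * ee m a (int j - int n)"
      unfolding ee2 t di by (simp add: algebra_simps)
    also have "\<dots> = 2 * int (m * tri n + n * d) + 2 * ee m a (int j - int n)"
      by (simp add: algebra_simps)
    finally show ?thesis .
  qed
  moreover have aux: "\<And>X Y Z :: int. 2 * X = 2 * Y + 2 * Z \<Longrightarrow> X = Y + Z" by linarith
  ultimately have h: "int (m * tri j + d * e) = int (m * tri n + n * d) + ee m a (int j - int n)" by blast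
  have "int (m * tri j + d * e) = int (m * tri n + n * d + nat (ee m a (int j - int n)))" using h e0 by simp
  then show ?thesis unfolding dd by (simp only: of_nat_eq_iff)
qed

lemma fjtp: assumes "1 \<le> a" "a < m" "n \<ge> 1"
  shows "(\<Prod>i<n. 1 - fps_X ^ (a + m * i)) * (\<Prod>i<n. 1 - fps_X ^ ((m - a) + m * i))
    = (\<Sum>j\<le>2*n. fps_const (sg (int j - int n)) * qb (fps_X ^ m) (2*n) j * fps_X ^ nat (ee m a (int j - int n)) :: real fps)"
proof -
  define x :: "real fps" where "x = fps_X ^ (m * n - a)"
  define p :: "real fps" where "p = fps_X ^ m"
  define E0 where "E0 = m * tri n + n * (m * n - a)"
  have "m \<le> m * n" using assms(3) by simp
  then have amn: "a \<le> m * n" using assms(2) by linarith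
  let ?A = "\<Prod>i<n. 1 - fps_X ^ (a + m * i) :: real fps"
  let ?B = "\<Prod>i<n. 1 - fps_X ^ ((m - a) + m * i) :: real fps"
  let ?c = "fps_const ((-1::real) ^ n) * fps_X ^ E0"
  have L: "(\<Prod>i<2*n. x + (-1) * p ^ i) = ?c * (?A * ?B)"
  proof -
    have split: "{..<2*n} = {..<n} \<union> {n..<2*n}" by auto
    have "(\<Prod>i<2*n. x + (-1) * p ^ i) = (\<Prod>i<n. x + (-1) * p ^ i) * (\<Prod>i\<in>{n..<2*n}. x + (-1) * p ^ i)"
      unfolding split by (rule prod.union_disjoint) auto
    also have "(\<Prod>i\<in>{n..<2*n}. x + (-1) * p ^ i) = (\<Prod>i<n. fps_X ^ (m * n - a) * (1 - fps_X ^ (a + m * i)))"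
      unfolding prod_shift_n
    proof (rule prod.cong)
      fix i assume "i \<in> {..<n}"
      have "m * n - a + (a + m * i) = m * (n + i)" using amn by (simp add: algebra_simps)
      then show "x + (-1) * p ^ (n + i) = fps_X ^ (m * n - a) * (1 - fps_X ^ (a + m * i))"
        unfolding x_def p_def by (simp add: algebra_simps power_add[symmetric] power_mult[symmetric])
    qed simp
    also have "\<dots> = fps_X ^ (n * (m * n - a)) * ?A"
    proof -
      have "(\<Prod>i<n. (fps_X ^ (m * n - a) :: real fps)) = fps_X ^ (n * (m * n - a))"
        by (simp add: power_mult[symmetric] mult.commute)
      then show ?thesis by (simp only: prod.distrib)
    qed
    also have "(\<Prod>i<n. x + (-1) * p ^ i) = (\<Prod>i<n. x + (-1) * p ^ (n - Suc i))"
      by (rule prod.nat_diff_reindex[symmetric])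
    also have "\<dots> = (\<Prod>i<n. fps_const (-1) * (fps_X ^ (m * (n - Suc i)) * (1 - fps_X ^ ((m - a) + m * i))))"
    proof (rule prod.cong)
      fix i assume i: "i \<in> {..<n}"
      have "m * (n - Suc i) + ((m - a) + m * i) = m * n - a"
      proof -
        obtain r where r: "n = Suc (i + r)" using i less_imp_Suc_add by auto
        then have "n - Suc i = r" by simp
        moreover have "m * n = m * r + m + m * i" unfolding r by (simp add: algebra_simps)
        ultimately show ?thesis using assms by simp
      qed
      then show "x + (-1) * p ^ (n - Suc i) = fps_const (-1) * (fps_X ^ (m * (n - Suc i)) * (1 - fps_X ^ ((m - a) + m * i)))"
        unfolding x_def p_def by (simp add: algebra_simps power_add[symmetric] power_mult[symmetric] fps_const_neg[symmetric])
    qed simp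
    also have "\<dots> = fps_const ((-1) ^ n) * fps_X ^ (m * tri n) * ?B"
    proof -
      have "(\<Prod>i<n. fps_X ^ (m * (n - Suc i)) :: real fps) = (\<Prod>i<n. fps_X ^ (m * i))"
        using prod.nat_diff_reindex[of "\<lambda>i. fps_X ^ (m * i) :: real fps" n] by simp
      also have "\<dots> = fps_X ^ (m * tri n)"
        by (simp only: power_sum[symmetric] sum_distrib_left[symmetric] sum_tri)
      finally have "(\<Prod>i<n. fps_X ^ (m * (n - Suc i)) :: real fps) = fps_X ^ (m * tri n)" .
      then show ?thesis by (simp add: prod.distrib fps_const_power)
    qed
    finally show ?thesis unfolding E0_def by (simp add: power_add algebra_simps fps_const_mult[symmetric])
  qed
  have R: "(\<Sum>j\<le>2*n. qb p (2*n) j * p ^ tri j * (-1) ^ j * x ^ (2*n - j))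
     = ?c * (\<Sum>j\<le>2*n. fps_const (sg (int j - int n)) * qb (fps_X ^ m) (2*n) j * fps_X ^ nat (ee m a (int j - int n)))"
    unfolding sum_distrib_left
  proof (rule sum.cong)
    fix j assume j: "j \<in> {..2*n}"
    have F1: "p ^ tri j * x ^ (2 * n - j) = fps_X ^ E0 * fps_X ^ nat (ee m a (int j - int n))"
      unfolding p_def x_def E0_def power_add[symmetric] power_mult[symmetric]
      using exp_id[of j n a m] j amn assms by simp
    have F2: "(-1 :: real fps) ^ j = fps_const ((-1) ^ n) * fps_const (sg (int j - int n))"
    proof -
      have c: "\<And>r. (-1 :: real fps) ^ r = fps_const ((-1) ^ r)"
      proof -
        fix r :: nat
        show "(-1 :: real fps) ^ r = fps_const ((-1) ^ r)"
        proof -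
          have "(-1 :: real fps) = fps_const (-1)" by (simp only: fps_const_neg[symmetric] fps_const_1_eq_1)
          then show ?thesis by (simp only: fps_const_power)
        qed
      qed
      show ?thesis unfolding c sg_pow[of j n] fps_const_mult ..
    qed
    have "qb p (2*n) j * p ^ tri j * (-1) ^ j * x ^ (2*n - j) = qb p (2*n) j * (p ^ tri j * x ^ (2*n - j)) * (-1) ^ j"
      by (simp only: mult_ac)
    also have "\<dots> = ?c * (fps_const (sg (int j - int n)) * qb (fps_X ^ m) (2*n) j * fps_X ^ nat (ee m a (int j - int n)))"
      unfolding F1 F2 unfolding p_def by (simp only: mult_ac)
    finally show "qb p (2*n) j * p ^ tri j * (-1) ^ j * x ^ (2*n - j)
      = ?c * (fps_const (sg (int j - int n)) * qb (fps_X ^ m) (2*n) j * fps_X ^ nat (ee m a (int j - int n)))" .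
  qed simp
  have "?c * (?A * ?B) = ?c * (\<Sum>j\<le>2*n. fps_const (sg (int j - int n)) * qb (fps_X ^ m) (2*n) j * fps_X ^ nat (ee m a (int j - int n)))"
    unfolding L[symmetric] R[symmetric] by (rule qbin)
  moreover have "?c \<noteq> 0" by simp
  ultimately show ?thesis using mult_left_cancel by blast
qed




definition ls :: "'a set \<Rightarrow> ('a \<Rightarrow> int) \<Rightarrow> ('a \<Rightarrow> real) \<Rightarrow> real fps" where
  "ls S e w = Abs_fps (\<lambda>N. \<Sum>x\<in>{x\<in>S. e x = int N}. w x)"

definition th :: "nat \<Rightarrow> nat \<Rightarrow> real fps" where "th m a = ls UNIV (ee m a) sg"

lemma cng_sum: "(\<And>i. i \<in> S \<Longrightarrow> cng K (f i) (g i)) \<Longrightarrow> cng K (\<Sum>i\<in>S. f i) (\<Sum>i\<in>S. g i)"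
  unfolding cng_def by (auto intro!: sum.cong simp: fps_sum_nth)

lemma cng_Xpow0: "f > N \<Longrightarrow> cng (Suc N) (fps_X ^ f * G) 0"
  unfolding cng_def by (auto simp: fps_X_power_mult_nth)

lemma pp_X: "pp (fps_X ^ m :: real fps) r = (\<Prod>i<r. 1 - fps_X ^ (m + m * i))"
  unfolding pp_def
proof (rule prod.cong)
  fix i
  have "(fps_X ^ m :: real fps) ^ Suc i = fps_X ^ (m * Suc i)" by (rule power_mult[symmetric])
  also have "m * Suc i = m + m * i" by simp
  finally show "1 - (fps_X ^ m :: real fps) ^ Suc i = 1 - fps_X ^ (m + m * i)" by simp
qed simp

lemma jtp: assumes "1 \<le> a" "a < m" shows "Jam a m = th m a"
proof (rule fps_ext)
  fix N
  define n :: nat where "n = 2 * N + 2"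
  have n1: "n \<ge> 1" "N \<le> n" unfolding n_def by auto
  let ?A = "qpoch a m" and ?B = "qpoch (m - a) m" and ?E = "qpoch m m"
  have gA: "good (\<lambda>i. 1 - fps_X ^ (a + m * i))" by (rule good_qp) (use assms in auto)
  have gB: "good (\<lambda>i. 1 - fps_X ^ ((m - a) + m * i))" by (rule good_qp) (use assms in auto)
  have gE: "good (\<lambda>i. 1 - fps_X ^ (m + m * i))" by (rule good_qp) (use assms in auto)
  have E0: "fps_nth ?E 0 = 1" unfolding qpoch_ip by (rule ip0[OF gE])
  define f where "f j = nat (ee m a (int j - int n))" for j
  define c where "c j = fps_const (sg (int j - int n))" for j
  define q where "q j = qb (fps_X ^ m :: real fps) (2 * n) j" for j
  have "cng (Suc N) (Jam a m) ((\<Prod>i<n. 1 - fps_X ^ (a + m * i)) * (\<Prod>i<n. 1 - fps_X ^ ((m - a) + m * i)) * ?E)"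
    unfolding Jam_def by (intro cng_mult cng_refl; unfold qpoch_ip; rule ip_cng) (use gA gB n1 in auto)
  also have "(\<Prod>i<n. 1 - fps_X ^ (a + m * i)) * (\<Prod>i<n. 1 - fps_X ^ ((m - a) + m * i)) * ?E
      = (\<Sum>j\<le>2*n. c j * q j * fps_X ^ f j * ?E)"
    unfolding fjtp[OF assms n1(1)] sum_distrib_right c_def q_def f_def ..
  finally have c1: "cng (Suc N) (Jam a m) (\<Sum>j\<le>2*n. c j * q j * fps_X ^ f j * ?E)" .
  have c2: "cng (Suc N) (\<Sum>j\<le>2*n. c j * q j * fps_X ^ f j * ?E) (\<Sum>j\<le>2*n. c j * fps_X ^ f j)"
  proof (rule cng_sum)
    fix j assume j: "j \<in> {..2*n}"
    show "cng (Suc N) (c j * q j * fps_X ^ f j * ?E) (c j * fps_X ^ f j)"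
    proof (cases "f j > N")
      case True
      have "cng (Suc N) (fps_X ^ f j * (c j * q j * ?E)) 0" by (rule cng_Xpow0[OF True])
      moreover have "cng (Suc N) (fps_X ^ f j * c j) 0" by (rule cng_Xpow0[OF True])
      ultimately show ?thesis by (auto simp: mult_ac intro: cng_trans cng_sym)
    next
      case False
      have eb: "ee m a (int j - int n) \<ge> \<bar>int j - int n\<bar>" by (rule ee_bound) (use assms in auto)
      have e0: "ee m a (int j - int n) \<ge> 0" by (rule ee_nonneg) (use assms in auto)
      have "ee m a (int j - int n) \<le> int N" using False e0 unfolding f_def by linarith
      then have jb: "N \<le> j" "N \<le> 2 * n - j" "j \<le> 2 * n" using eb j unfolding n_def by auto
      have qpp: "q j * pp (fps_X ^ m) j * pp (fps_X ^ m) (2 * n - j) = pp (fps_X ^ m) (2 * n)"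
        unfolding q_def by (rule qb_pp) (use jb in auto)
      have cE: "\<And>r. N \<le> r \<Longrightarrow> cng (Suc N) (pp (fps_X ^ m) r) ?E"
        unfolding pp_X qpoch_ip by (rule cng_sym, rule ip_cng[OF gE])
      have "cng (Suc N) (q j * ?E * ?E) ?E"
      proof -
        have "cng (Suc N) (q j * ?E * ?E) (q j * pp (fps_X ^ m) j * pp (fps_X ^ m) (2 * n - j))"
          by (intro cng_mult cng_refl cng_sym[OF cE]) (use jb in auto)
        then show ?thesis unfolding qpp using cE[of "2 * n"] jb by (auto intro: cng_trans)
      qed
      then have "cng (Suc N) (q j * ?E * ?E * inverse ?E) (?E * inverse ?E)"
        by (intro cng_mult cng_refl)
      moreover have EE: "?E * inverse ?E = 1" by (rule inverse_mult_eq_1') (simp add: E0)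
      moreover have "q j * ?E * ?E * inverse ?E = q j * ?E" by (simp only: mult.assoc EE mult_1_right)
      ultimately have "cng (Suc N) (q j * ?E) 1" by simp
      then have "cng (Suc N) (c j * fps_X ^ f j * (q j * ?E)) (c j * fps_X ^ f j * 1)"
        by (intro cng_mult cng_refl)
      then show ?thesis by (simp add: mult_ac)
    qed
  qed
  have c3: "fps_nth (\<Sum>j\<le>2*n. c j * fps_X ^ f j) N = fps_nth (th m a) N"
  proof -
    have "fps_nth (\<Sum>j\<le>2*n. c j * fps_X ^ f j) N = (\<Sum>j\<le>2*n. if f j = N then sg (int j - int n) else 0)"
      unfolding fps_sum_nth c_def by (rule sum.cong) (auto simp: fps_X_power_nth)
    also have "\<dots> = (\<Sum>j\<in>{j\<in>{..2*n}. f j = N}. sg (int j - int n))"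
      by (rule sum.inter_filter[symmetric]) simp
    also have "\<dots> = (\<Sum>k\<in>{k\<in>UNIV. ee m a k = int N}. sg k)"
    proof (rule sum.reindex_bij_witness[where j = "\<lambda>j. int j - int n" and i = "\<lambda>k. nat (k + int n)"])
      fix k assume k: "k \<in> {k\<in>UNIV. ee m a k = int N}"
      have "ee m a k \<ge> \<bar>k\<bar>" by (rule ee_bound) (use assms in auto)
      then have "\<bar>k\<bar> \<le> int N" using k by auto
      then have kb: "k + int n \<ge> 0" "k + int n \<le> 2 * int n" unfolding n_def by auto
      show "int (nat (k + int n)) - int n = k" using kb by simp
      show "nat (k + int n) \<in> {j\<in>{..2*n}. f j = N}"
        using kb k unfolding f_def by auto
    next
      fix j assume j: "j \<in> {j\<in>{..2*n}. f j = N}"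
      have e0: "ee m a (int j - int n) \<ge> 0" by (rule ee_nonneg) (use assms in auto)
      show "nat (int j - int n + int n) = j" by simp
      show "int j - int n \<in> {k\<in>UNIV. ee m a k = int N}" using j e0 unfolding f_def by auto
    qed simp
    also have "\<dots> = fps_nth (th m a) N" unfolding th_def ls_def by simp
    finally show ?thesis .
  qed
  have "cng (Suc N) (Jam a m) (\<Sum>j\<le>2*n. c j * fps_X ^ f j)" using c1 c2 by (rule cng_trans)
  then show "fps_nth (Jam a m) N = fps_nth (th m a) N" using c3 by (simp add: cng_def)
qed




lemma ls_nth: "fps_nth (ls S e w) N = (\<Sum>x\<in>{x\<in>S. e x = int N}. w x)"
  by (simp add: ls_def)

lemma ls_bij:
  assumes "\<And>x. x \<in> S \<Longrightarrow> \<phi> x \<in> T" "\<And>y. y \<in> T \<Longrightarrow> \<psi> y \<in> S"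
    "\<And>x. x \<in> S \<Longrightarrow> \<psi> (\<phi> x) = x" "\<And>y. y \<in> T \<Longrightarrow> \<phi> (\<psi> y) = y"
    "\<And>x. x \<in> S \<Longrightarrow> e' (\<phi> x) = e x" "\<And>x. x \<in> S \<Longrightarrow> w' (\<phi> x) = w x"
  shows "ls S e w = ls T e' w'"
proof (rule fps_ext)
  fix N
  have ee': "\<And>y. y \<in> T \<Longrightarrow> e (\<psi> y) = e' y"
  proof -
    fix y assume y: "y \<in> T"
    have "e' (\<phi> (\<psi> y)) = e (\<psi> y)" by (rule assms(5)[OF assms(2)[OF y]])
    then show "e (\<psi> y) = e' y" using assms(4)[OF y] by simp
  qed
  show "fps_nth (ls S e w) N = fps_nth (ls T e' w') N"
    unfolding ls_nth
    by (rule sum.reindex_bij_witness[where j = \<phi> and i = \<psi>]) (use assms ee' in auto)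
qed

lemma ls_cong: "(\<And>x. x \<in> S \<Longrightarrow> e x = e' x) \<Longrightarrow> (\<And>x. x \<in> S \<Longrightarrow> w x = w' x) \<Longrightarrow> ls S e w = ls S e' w'"
  by (rule ls_bij[where \<phi> = id and \<psi> = id]) auto

lemma ls_shift: assumes "\<And>x. x \<in> S \<Longrightarrow> e x \<ge> 0"
  shows "fps_X ^ c * ls S e w = ls S (\<lambda>x. e x + int c) w"
proof (rule fps_ext)
  fix N
  show "fps_nth (fps_X ^ c * ls S e w) N = fps_nth (ls S (\<lambda>x. e x + int c) w) N"
  proof (cases "N < c")
    case True
    have "\<And>x. x \<in> S \<Longrightarrow> e x + int c \<noteq> int N" using True assms by force
    then show ?thesis using True by (auto simp: fps_X_power_mult_nth ls_nth intro!: sum.neutral)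
  next
    case False
    have "{x\<in>S. e x + int c = int N} = {x\<in>S. e x = int (N - c)}" using False by auto
    then show ?thesis using False by (simp add: fps_X_power_mult_nth ls_nth)
  qed
qed

lemma ls_mult:
  assumes e0: "\<And>x. x \<in> S \<Longrightarrow> e x \<ge> 0" and f0: "\<And>y. y \<in> T \<Longrightarrow> f y \<ge> 0"
    and fe: "\<And>N. finite {x\<in>S. e x = N}" and ff: "\<And>N. finite {y\<in>T. f y = N}"
  shows "ls S e w * ls T f v = ls (S \<times> T) (\<lambda>(x, y). e x + f y) (\<lambda>(x, y). w x * v y)"
proof (rule fps_ext)
  fix N
  define Se where "Se i = {x\<in>S. e x = int i}" for i
  define Tf where "Tf i = {y\<in>T. f y = int i}" for i
  define P where "P = {p\<in>S \<times> T. (case p of (x, y) \<Rightarrow> e x + f y) = int N}"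
  let ?h = "\<lambda>p. case p of (x, y) \<Rightarrow> w x * v y"
  have finP: "finite P"
  proof (rule finite_subset)
    show "P \<subseteq> (\<Union>i\<le>N. Se i) \<times> (\<Union>j\<le>N. Tf j)"
    proof
      fix p assume "p \<in> P"
      then obtain x y where p: "p = (x, y)" "x \<in> S" "y \<in> T" "e x + f y = int N" unfolding P_def by auto
      have "e x \<ge> 0" "f y \<ge> 0" using p e0 f0 by auto
      then have "x \<in> Se (nat (e x))" "y \<in> Tf (nat (f y))" "nat (e x) \<le> N" "nat (f y) \<le> N"
        using p unfolding Se_def Tf_def by auto
      then show "p \<in> (\<Union>i\<le>N. Se i) \<times> (\<Union>j\<le>N. Tf j)" using p by blast
    qed
    show "finite ((\<Union>i\<le>N. Se i) \<times> (\<Union>j\<le>N. Tf j))" unfolding Se_def Tf_def using fe ff by auto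
  qed
  have "fps_nth (ls S e w * ls T f v) N = (\<Sum>i=0..N. (\<Sum>x\<in>Se i. w x) * (\<Sum>y\<in>Tf (N - i). v y))"
    unfolding fps_mult_nth ls_nth Se_def Tf_def by simp
  also have "\<dots> = (\<Sum>i=0..N. \<Sum>p\<in>Se i \<times> Tf (N - i). ?h p)"
    by (rule sum.cong) (auto simp: sum_product sum.cartesian_product)
  also have "\<dots> = (\<Sum>i=0..N. \<Sum>p\<in>{p\<in>P. nat (e (fst p)) = i}. ?h p)"
  proof (rule sum.cong)
    fix i assume i: "i \<in> {0..N}"
    have "Se i \<times> Tf (N - i) = {p\<in>P. nat (e (fst p)) = i}"
    proof (intro set_eqI iffI)
      fix p assume "p \<in> Se i \<times> Tf (N - i)"
      then show "p \<in> {p\<in>P. nat (e (fst p)) = i}" using i unfolding Se_def Tf_def P_def by auto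
    next
      fix p assume "p \<in> {p\<in>P. nat (e (fst p)) = i}"
      then obtain x y where p: "p = (x, y)" "x \<in> S" "y \<in> T" "e x + f y = int N" "nat (e x) = i"
        unfolding P_def by auto
      have "e x \<ge> 0" using e0 p by auto
      then show "p \<in> Se i \<times> Tf (N - i)" using p i unfolding Se_def Tf_def by auto
    qed
    then show "(\<Sum>p\<in>Se i \<times> Tf (N - i). ?h p) = (\<Sum>p\<in>{p\<in>P. nat (e (fst p)) = i}. ?h p)" by simp
  qed simp
  also have "\<dots> = (\<Sum>p\<in>P. ?h p)"
  proof (rule sum.group[OF finP])
    show "finite {0..N}" by simp
    show "(\<lambda>p. nat (e (fst p))) ` P \<subseteq> {0..N}"
    proof
      fix i assume "i \<in> (\<lambda>p. nat (e (fst p))) ` P"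
      then obtain x y where "x \<in> S" "y \<in> T" "e x + f y = int N" "i = nat (e x)" unfolding P_def by auto
      then show "i \<in> {0..N}" using f0 by fastforce
    qed
  qed
  also have "\<dots> = fps_nth (ls (S \<times> T) (\<lambda>(x, y). e x + f y) (\<lambda>(x, y). w x * v y)) N"
    unfolding ls_nth P_def by simp
  finally show "fps_nth (ls S e w * ls T f v) N = fps_nth (ls (S \<times> T) (\<lambda>(x, y). e x + f y) (\<lambda>(x, y). w x * v y)) N" .
qed




lemma fin_pair:
  fixes e :: "'a \<Rightarrow> int" and f :: "'b \<Rightarrow> int"
  assumes e0: "\<And>x. x \<in> S \<Longrightarrow> e x \<ge> 0" and f0: "\<And>y. y \<in> T \<Longrightarrow> f y \<ge> 0"
    and fe: "\<And>N. finite {x\<in>S. e x = N}" and ff: "\<And>N. finite {y\<in>T. f y = N}"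
  shows "finite {p\<in>S \<times> T. (case p of (x, y) \<Rightarrow> e x + f y) = M}"
proof (cases "M \<ge> 0")
  case False
  have "\<And>x y. x \<in> S \<Longrightarrow> y \<in> T \<Longrightarrow> e x + f y \<noteq> M"
  proof -
    fix x y assume "x \<in> S" "y \<in> T"
    then have "e x \<ge> 0" "f y \<ge> 0" using e0 f0 by auto
    then show "e x + f y \<noteq> M" using False by linarith
  qed
  then have "{p\<in>S \<times> T. (case p of (x, y) \<Rightarrow> e x + f y) = M} = {}" by auto
  then show ?thesis by (simp only: finite.emptyI)
next
  case True
  define N where "N = nat M"
  have M: "M = int N" using True by (simp add: N_def)
  show ?thesis
  proof (rule finite_subset)
    show "{p\<in>S \<times> T. (case p of (x, y) \<Rightarrow> e x + f y) = M} \<subseteq> (\<Union>i\<le>N. {x\<in>S. e x = int i}) \<times> (\<Union>j\<le>N. {y\<in>T. f y = int j})"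
    proof
      fix p assume "p \<in> {p\<in>S \<times> T. (case p of (x, y) \<Rightarrow> e x + f y) = M}"
      then obtain x y where p: "p = (x, y)" "x \<in> S" "y \<in> T" "e x + f y = int N" unfolding M by auto
      have "e x \<ge> 0" "f y \<ge> 0" using p e0 f0 by auto
      then have "x \<in> {x\<in>S. e x = int (nat (e x))}" "y \<in> {y\<in>T. f y = int (nat (f y))}" "nat (e x) \<le> N" "nat (f y) \<le> N"
        using p by auto
      then show "p \<in> (\<Union>i\<le>N. {x\<in>S. e x = int i}) \<times> (\<Union>j\<le>N. {y\<in>T. f y = int j})" using p by blast
    qed
    show "finite ((\<Union>i\<le>N. {x\<in>S. e x = int i}) \<times> (\<Union>j\<le>N. {y\<in>T. f y = int j}))" using fe ff by auto
  qed
qed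

lemma th_fin: assumes "1 \<le> a" "a < m" shows "finite {k. ee m a k = N}"
proof (rule finite_subset)
  show "{k. ee m a k = N} \<subseteq> {-N..N}"
  proof
    fix k assume "k \<in> {k. ee m a k = N}"
    then have "\<bar>k\<bar> \<le> N" using ee_bound[OF assms, of k] by simp
    then show "k \<in> {-N..N}" by (simp add: abs_le_iff)
  qed
qed simp

lemma ls_mult_U:
  fixes e :: "'a \<Rightarrow> int" and f :: "'b \<Rightarrow> int"
  assumes e0: "\<And>x. e x \<ge> 0" and f0: "\<And>y. f y \<ge> 0"
    and fe: "\<And>N. finite {x. e x = N}" and ff: "\<And>N. finite {y. f y = N}"
  shows "ls UNIV e w * ls UNIV f v = ls UNIV (\<lambda>(x, y). e x + f y) (\<lambda>(x, y). w x * v y)"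
  using ls_mult[of UNIV e UNIV f w v] assms by simp

lemma fin_pair_U:
  fixes e :: "'a \<Rightarrow> int" and f :: "'b \<Rightarrow> int"
  assumes e0: "\<And>x. e x \<ge> 0" and f0: "\<And>y. f y \<ge> 0"
    and fe: "\<And>N. finite {x. e x = N}" and ff: "\<And>N. finite {y. f y = N}"
  shows "finite {p. (case p of (x, y) \<Rightarrow> e x + f y) = M}"
  using fin_pair[of UNIV e UNIV f M] assms by simp

lemma sg_add: "sg a * sg b = sg (a + b)"
  unfolding sg_def by auto

definition E4 :: "nat \<Rightarrow> nat \<Rightarrow> nat \<Rightarrow> nat \<Rightarrow> int \<Rightarrow> int \<times> int \<times> int \<times> int \<Rightarrow> int" where
  "E4 a b c d s = (\<lambda>(n1, n2, n3, n4). ee 11 a n1 + ee 11 b n2 + ee 11 c n3 + ee 11 d n4 + s)"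

definition ws :: "int \<times> int \<times> int \<times> int \<Rightarrow> real" where
  "ws = (\<lambda>(n1, n2, n3, n4). sg (n1 + n2 + n3 + n4))"

lemma th4:
  assumes "1 \<le> a" "a < 11" "1 \<le> b" "b < 11" "1 \<le> c" "c < 11" "1 \<le> d" "d < 11"
  shows "fps_X ^ s * (th 11 a * (th 11 b * (th 11 c * th 11 d))) = ls UNIV (E4 a b c d (int s)) ws"
proof -
  have n: "\<And>x. 1 \<le> x \<Longrightarrow> x < 11 \<Longrightarrow> \<forall>k. ee 11 x k \<ge> 0" using ee_nonneg by blast
  have f: "\<And>x. 1 \<le> x \<Longrightarrow> x < 11 \<Longrightarrow> \<forall>N. finite {k. ee 11 x k = N}" using th_fin by blast
  have cd: "th 11 c * th 11 d = ls UNIV (\<lambda>(x, y). ee 11 c x + ee 11 d y) (\<lambda>(x, y). sg x * sg y)"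
    unfolding th_def by (rule ls_mult_U) (use n f assms in auto)
  have cd0: "\<And>p. (case p of (x, y) \<Rightarrow> ee 11 c x + ee 11 d y) \<ge> 0" using n assms by (auto split: prod.split)
  have cdf: "\<And>N. finite {p. (case p of (x, y) \<Rightarrow> ee 11 c x + ee 11 d y) = N}"
    by (rule fin_pair_U) (use n f assms in auto)
  have bcd: "th 11 b * (th 11 c * th 11 d) = ls UNIV (\<lambda>(x, y). ee 11 b x + (case y of (u, v) \<Rightarrow> ee 11 c u + ee 11 d v))
      (\<lambda>(x, y). sg x * (case y of (u, v) \<Rightarrow> sg u * sg v))"
    unfolding cd unfolding th_def by (rule ls_mult_U) (use n f assms cd0 cdf in auto)
  have bcd0: "\<And>p. (case p of (x, y) \<Rightarrow> ee 11 b x + (case y of (u, v) \<Rightarrow> ee 11 c u + ee 11 d v)) \<ge> 0"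
    using n assms by (auto split: prod.split)
  have bcdf: "\<And>N. finite {p. (case p of (x, y) \<Rightarrow> ee 11 b x + (case y of (u, v) \<Rightarrow> ee 11 c u + ee 11 d v)) = N}"
    by (rule fin_pair_U) (use n f assms cd0 cdf in auto)
  have abcd: "th 11 a * (th 11 b * (th 11 c * th 11 d)) = ls UNIV (\<lambda>(x, y). ee 11 a x + (case y of (x, y) \<Rightarrow> ee 11 b x + (case y of (u, v) \<Rightarrow> ee 11 c u + ee 11 d v)))
      (\<lambda>(x, y). sg x * (case y of (x, y) \<Rightarrow> sg x * (case y of (u, v) \<Rightarrow> sg u * sg v)))"
    unfolding bcd unfolding th_def by (rule ls_mult_U) (use n f assms bcd0 bcdf in auto)
  have "fps_X ^ s * (th 11 a * (th 11 b * (th 11 c * th 11 d))) = ls UNIV (\<lambda>p. (case p of (x, y) \<Rightarrow> ee 11 a x + (case y of (x, y) \<Rightarrow> ee 11 b x + (case y of (u, v) \<Rightarrow> ee 11 c u + ee 11 d v))) + int s)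
      (\<lambda>(x, y). sg x * (case y of (x, y) \<Rightarrow> sg x * (case y of (u, v) \<Rightarrow> sg u * sg v)))"
    unfolding abcd by (rule ls_shift) (use n assms in \<open>auto split: prod.split\<close>)
  also have "\<dots> = ls UNIV (E4 a b c d (int s)) ws"
    by (rule ls_cong) (auto simp: E4_def ws_def sg_add algebra_simps split: prod.split)
  finally show ?thesis .
qed

definition cnt :: "(int \<times> int \<times> int \<times> int \<Rightarrow> int) \<Rightarrow> real fps" where
  "cnt F = ls UNIV F (\<lambda>_. 1)"

definition rho :: "int \<Rightarrow> int \<times> int \<times> int \<times> int \<Rightarrow> int \<times> int \<times> int \<times> int" where
  "rho p = (\<lambda>(n1, n2, n3, t). (n1, n2, n3, 2 * t + p - n1 - n2 - n3))"

lemma cnt_bij: assumes "\<And>u. \<psi> (\<phi> u) = u" "\<And>v. \<phi> (\<psi> v) = v" "\<And>u. F' (\<phi> u) = F u"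
  shows "cnt F = cnt F'"
  unfolding cnt_def by (rule ls_bij[where \<phi> = \<phi> and \<psi> = \<psi>]) (use assms in auto)

lemma E4_nonneg: assumes "1 \<le> a" "a < 11" "1 \<le> b" "b < 11" "1 \<le> c" "c < 11" "1 \<le> d" "d < 11" "s \<ge> 0"
  shows "E4 a b c d s x \<ge> 0"
  using ee_nonneg[of a 11] ee_nonneg[of b 11] ee_nonneg[of c 11] ee_nonneg[of d 11] assms
  by (auto simp: E4_def split: prod.split intro!: add_nonneg_nonneg)

lemma ws_mod: "ws x = (if (case x of (n1, n2, n3, n4) \<Rightarrow> n1 + n2 + n3 + n4) mod 2 = 0 then 1 else -1)"
  by (cases x) (simp add: ws_def sg_def even_iff_mod_2_eq_zero)

lemma parity_split:
  assumes fin: "\<And>N. finite {x. E x = N}"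
  shows "ls UNIV E ws = cnt (\<lambda>u. E (rho 0 u)) - cnt (\<lambda>u. E (rho 1 u))"
proof -
  define ev where "ev = {x :: int \<times> int \<times> int \<times> int. even (case x of (n1, n2, n3, n4) \<Rightarrow> n1 + n2 + n3 + n4)}"
  have sp: "\<And>p :: int. p \<in> {0, 1} \<Longrightarrow> cnt (\<lambda>u. E (rho p u)) = ls {x. (case x of (n1, n2, n3, n4) \<Rightarrow> n1 + n2 + n3 + n4) mod 2 = p} E (\<lambda>_. 1)"
  proof -
    fix p :: int assume p: "p \<in> {0, 1}"
    show "cnt (\<lambda>u. E (rho p u)) = ls {x. (case x of (n1, n2, n3, n4) \<Rightarrow> n1 + n2 + n3 + n4) mod 2 = p} E (\<lambda>_. 1)"
      unfolding cnt_def
    proof (rule ls_bij[where \<phi> = "rho p" and \<psi> = "\<lambda>(n1, n2, n3, n4). (n1, n2, n3, (n1 + n2 + n3 + n4) div 2)"])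
      fix x :: "int \<times> int \<times> int \<times> int"
      show "rho p x \<in> {x. (case x of (n1, n2, n3, n4) \<Rightarrow> n1 + n2 + n3 + n4) mod 2 = p}"
        using p by (cases x) (auto simp: rho_def)
      show "(case rho p x of (n1, n2, n3, n4) \<Rightarrow> (n1, n2, n3, (n1 + n2 + n3 + n4) div 2)) = x"
        using p by (cases x) (auto simp: rho_def)
    next
      fix y :: "int \<times> int \<times> int \<times> int"
      assume y: "y \<in> {x. (case x of (n1, n2, n3, n4) \<Rightarrow> n1 + n2 + n3 + n4) mod 2 = p}"
      obtain n1 n2 n3 n4 where yy: "y = (n1, n2, n3, n4)" by (cases y) auto
      have "n1 + n2 + n3 + n4 = 2 * ((n1 + n2 + n3 + n4) div 2) + p"
        using y yy div_mult_mod_eq[of "n1 + n2 + n3 + n4" 2] by simp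
      then show "rho p (case y of (n1, n2, n3, n4) \<Rightarrow> (n1, n2, n3, (n1 + n2 + n3 + n4) div 2)) = y"
        unfolding yy rho_def by simp
    qed auto
  qed
  show ?thesis
  proof (rule fps_ext)
    fix N
    let ?F = "{x. E x = int N}"
    let ?P = "\<lambda>p. {x :: int \<times> int \<times> int \<times> int. (case x of (n1, n2, n3, n4) \<Rightarrow> n1 + n2 + n3 + n4) mod 2 = p}"
    have F: "finite ?F" by (rule fin)
    have u: "?F = {x \<in> ?P 0. E x = int N} \<union> {x \<in> ?P 1. E x = int N}" by auto
    have "fps_nth (ls UNIV E ws) N = (\<Sum>x\<in>?F. ws x)" by (simp add: ls_nth)
    also have "\<dots> = (\<Sum>x\<in>{x \<in> ?P 0. E x = int N}. ws x) + (\<Sum>x\<in>{x \<in> ?P 1. E x = int N}. ws x)"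
      unfolding u by (rule sum.union_disjoint) (use F in auto)
    also have "(\<Sum>x\<in>{x \<in> ?P 0. E x = int N}. ws x) = (\<Sum>x\<in>{x \<in> ?P 0. E x = int N}. 1)"
      by (rule sum.cong) (auto simp: ws_mod)
    also have "(\<Sum>x\<in>{x \<in> ?P 1. E x = int N}. ws x) = - (\<Sum>x\<in>{x \<in> ?P 1. E x = int N}. 1)"
      unfolding sum_negf[symmetric] by (rule sum.cong) (auto simp: ws_mod)
    finally show "fps_nth (ls UNIV E ws) N = fps_nth (cnt (\<lambda>u. E (rho 0 u)) - cnt (\<lambda>u. E (rho 1 u))) N"
      using sp[of 0] sp[of 1] by (simp add: ls_nth)
  qed
qed




lemma dbl_eq: "2 * x = 2 * y \<Longrightarrow> x = (y :: int)" by simp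

lemma E4_dbl: "2 * E4 a b c d s (n1, n2, n3, n4) =
   11 * (n1 * (n1 - 1)) + 2 * int a * n1 + 11 * (n2 * (n2 - 1)) + 2 * int b * n2
 + 11 * (n3 * (n3 - 1)) + 2 * int c * n3 + 11 * (n4 * (n4 - 1)) + 2 * int d * n4 + 2 * s"
proof -
  have "2 * E4 a b c d s (n1, n2, n3, n4) = 2 * ee 11 a n1 + 2 * ee 11 b n2 + 2 * ee 11 c n3 + 2 * ee 11 d n4 + 2 * s"
    by (simp add: E4_def algebra_simps)
  then show ?thesis unfolding ee2 by simp
qed

lemma fin_E4: assumes "1 \<le> a" "a < 11" "1 \<le> b" "b < 11" "1 \<le> c" "c < 11" "1 \<le> d" "d < 11" "s \<ge> 0"
  shows "finite {x. E4 a b c d s x = N}"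
proof (rule finite_subset)
  show "{x. E4 a b c d s x = N} \<subseteq> {-N..N} \<times> {-N..N} \<times> {-N..N} \<times> {-N..N}"
  proof
    fix x assume x: "x \<in> {x. E4 a b c d s x = N}"
    obtain n1 n2 n3 n4 where xx: "x = (n1, n2, n3, n4)" by (cases x) auto
    have b: "ee 11 a n1 \<ge> \<bar>n1\<bar>" "ee 11 b n2 \<ge> \<bar>n2\<bar>" "ee 11 c n3 \<ge> \<bar>n3\<bar>" "ee 11 d n4 \<ge> \<bar>n4\<bar>"
      using ee_bound assms by auto
    have "E4 a b c d s x = ee 11 a n1 + ee 11 b n2 + ee 11 c n3 + ee 11 d n4 + s" unfolding xx E4_def by simp
    then have "\<bar>n1\<bar> \<le> N" "\<bar>n2\<bar> \<le> N" "\<bar>n3\<bar> \<le> N" "\<bar>n4\<bar> \<le> N" using x b assms(9) by auto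
    then show "x \<in> {-N..N} \<times> {-N..N} \<times> {-N..N} \<times> {-N..N}" unfolding xx by (auto simp: abs_le_iff)
  qed
qed simp

lemma m_I1_AC: "cnt (\<lambda>u. E4 2 3 4 4 0 (rho 0 u)) = cnt (\<lambda>u. E4 1 4 5 5 0 (rho 0 u))"
  apply (rule cnt_bij[where \<phi> = "\<lambda>(n1, n2, n3, t). (t, n1 + n2 - t, - n2 - n3 + t, n1)" and \<psi> = "\<lambda>(n1, n2, n3, t). (t, n1 + n2 - t, - n2 - n3 + t, n1)"])
  subgoal for u by (cases u) (simp add: algebra_simps)
  subgoal for v by (cases v) (simp add: algebra_simps)
  subgoal for u by (cases u) (simp add: rho_def, rule dbl_eq, simp only: E4_dbl, simp add: algebra_simps)
  done

lemma m_I1_AB: "cnt (\<lambda>u. E4 2 3 4 4 0 (rho 1 u)) = cnt (\<lambda>u. E4 1 2 3 3 1 (rho 1 u))"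
  apply (rule cnt_bij[where \<phi> = "\<lambda>(n1, n2, n3, t). (n1 - t, n2 - t, - n1 - n2 - n3 + t + 1, - t)" and \<psi> = "\<lambda>(n1, n2, n3, t). (n1 - t, n2 - t, - n1 - n2 - n3 + t + 1, - t)"])
  subgoal for u by (cases u) (simp add: algebra_simps)
  subgoal for v by (cases v) (simp add: algebra_simps)
  subgoal for u by (cases u) (simp add: rho_def, rule dbl_eq, simp only: E4_dbl, simp add: algebra_simps)
  done

lemma m_I1_BC: "cnt (\<lambda>u. E4 1 2 3 3 1 (rho 0 u)) = cnt (\<lambda>u. E4 1 4 5 5 0 (rho 1 u))"
  apply (rule cnt_bij[where \<phi> = "\<lambda>(n1, n2, n3, t). (- t + 1, n1 + n2 - t, - n2 - n3 + t, n1 - t)" and \<psi> = "\<lambda>(n1, n2, n3, t). (- n1 + t + 1, n2 - t, - n1 - n2 - n3 + t + 1, - n1 + 1)"])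
  subgoal for u by (cases u) (simp add: algebra_simps)
  subgoal for v by (cases v) (simp add: algebra_simps)
  subgoal for u by (cases u) (simp add: rho_def, rule dbl_eq, simp only: E4_dbl, simp add: algebra_simps)
  done

lemma id_I1: "ls UNIV (E4 2 3 4 4 0) ws - ls UNIV (E4 1 2 3 3 1) ws = ls UNIV (E4 1 4 5 5 0) ws"
  using m_I1_AC m_I1_AB m_I1_BC
  by (simp add: parity_split[OF fin_E4] algebra_simps)

lemma m_I2_AB: "cnt (\<lambda>u. E4 2 2 3 5 0 (rho 0 u)) = cnt (\<lambda>u. E4 1 3 4 4 0 (rho 0 u))"
  apply (rule cnt_bij[where \<phi> = "\<lambda>(n1, n2, n3, t). (n1 + n2 + n3 - t, - n3 + t, - n2 + t, t)" and \<psi> = "\<lambda>(n1, n2, n3, t). (n1 + n2 + n3 - t, - n3 + t, - n2 + t, t)"])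
  subgoal for u by (cases u) (simp add: algebra_simps)
  subgoal for v by (cases v) (simp add: algebra_simps)
  subgoal for u by (cases u) (simp add: rho_def, rule dbl_eq, simp only: E4_dbl, simp add: algebra_simps)
  done

lemma m_I2_AC: "cnt (\<lambda>u. E4 2 2 3 5 0 (rho 1 u)) = cnt (\<lambda>u. E4 1 1 2 5 1 (rho 1 u))"
  apply (rule cnt_bij[where \<phi> = "\<lambda>(n1, n2, n3, t). (- n2 - n3 + t + 1, - n1 - n3 + t + 1, - n1 - n2 + t + 1, - n1 - n2 - n3 + t + 1)" and \<psi> = "\<lambda>(n1, n2, n3, t). (n1 - t, n2 - t, n3 - t, n1 + n2 + n3 - 2 * t - 1)"])
  subgoal for u by (cases u) (simp add: algebra_simps)
  subgoal for v by (cases v) (simp add: algebra_simps)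
  subgoal for u by (cases u) (simp add: rho_def, rule dbl_eq, simp only: E4_dbl, simp add: algebra_simps)
  done

lemma m_I2_BC: "cnt (\<lambda>u. E4 1 3 4 4 0 (rho 1 u)) = cnt (\<lambda>u. E4 1 1 2 5 1 (rho 0 u))"
  apply (rule cnt_bij[where \<phi> = "\<lambda>(n1, n2, n3, t). (n2 + n3 - t, - n1 - n3 + t + 1, - n1 - n2 + t + 1, - n1 + 1)" and \<psi> = "\<lambda>(n1, n2, n3, t). (- t + 1, n1 + n2 - t, n1 + n3 - t, n1 + n2 + n3 - 2 * t)"])
  subgoal for u by (cases u) (simp add: algebra_simps)
  subgoal for v by (cases v) (simp add: algebra_simps)
  subgoal for u by (cases u) (simp add: rho_def, rule dbl_eq, simp only: E4_dbl, simp add: algebra_simps)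
  done

lemma id_I2: "ls UNIV (E4 2 2 3 5 0) ws - ls UNIV (E4 1 3 4 4 0) ws = ls UNIV (E4 1 1 2 5 1) ws"
  using m_I2_AB m_I2_AC m_I2_BC
  by (simp add: parity_split[OF fin_E4] algebra_simps)

lemma m_I3_AB: "cnt (\<lambda>u. E4 3 3 4 5 0 (rho 0 u)) = cnt (\<lambda>u. E4 2 4 5 5 0 (rho 0 u))"
  apply (rule cnt_bij[where \<phi> = "\<lambda>(n1, n2, n3, t). (t, n1 + n2 - t, n1 + n3 - t, n1 + n2 + n3 - t)" and \<psi> = "\<lambda>(n1, n2, n3, t). (n1 + n2 + n3 - t, - n3 + t, - n2 + t, n1)"])
  subgoal for u by (cases u) (simp add: algebra_simps)
  subgoal for v by (cases v) (simp add: algebra_simps)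
  subgoal for u by (cases u) (simp add: rho_def, rule dbl_eq, simp only: E4_dbl, simp add: algebra_simps)
  done

lemma m_I3_AC: "cnt (\<lambda>u. E4 3 3 4 5 0 (rho 1 u)) = cnt (\<lambda>u. E4 1 1 2 3 2 (rho 1 u))"
  apply (rule cnt_bij[where \<phi> = "\<lambda>(n1, n2, n3, t). (n2 - t, n1 - t, n3 - t, - t)" and \<psi> = "\<lambda>(n1, n2, n3, t). (n2 - t, n1 - t, n3 - t, - t)"])
  subgoal for u by (cases u) (simp add: algebra_simps)
  subgoal for v by (cases v) (simp add: algebra_simps)
  subgoal for u by (cases u) (simp add: rho_def, rule dbl_eq, simp only: E4_dbl, simp add: algebra_simps)
  done

lemma m_I3_BC: "cnt (\<lambda>u. E4 2 4 5 5 0 (rho 1 u)) = cnt (\<lambda>u. E4 1 1 2 3 2 (rho 0 u))"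
  apply (rule cnt_bij[where \<phi> = "\<lambda>(n1, n2, n3, t). (n2 + n3 - t, - n1 - n3 + t + 1, - n1 - n2 + t + 1, - n1 + 1)" and \<psi> = "\<lambda>(n1, n2, n3, t). (- t + 1, n1 + n2 - t, n1 + n3 - t, n1 + n2 + n3 - 2 * t)"])
  subgoal for u by (cases u) (simp add: algebra_simps)
  subgoal for v by (cases v) (simp add: algebra_simps)
  subgoal for u by (cases u) (simp add: rho_def, rule dbl_eq, simp only: E4_dbl, simp add: algebra_simps)
  done

lemma id_I3: "ls UNIV (E4 3 3 4 5 0) ws - ls UNIV (E4 2 4 5 5 0) ws = ls UNIV (E4 1 1 2 3 2) ws"
  using m_I3_AB m_I3_AC m_I3_BC
  by (simp add: parity_split[OF fin_E4] algebra_simps)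

lemma Pq_th: "1 \<le> a \<Longrightarrow> a < 11 \<Longrightarrow> Pq a = th 11 a"
  unfolding Pq_def by (rule jtp) auto

lemma th4': "1 \<le> a \<Longrightarrow> a < 11 \<Longrightarrow> 1 \<le> b \<Longrightarrow> b < 11 \<Longrightarrow> 1 \<le> c \<Longrightarrow> c < 11 \<Longrightarrow> 1 \<le> d \<Longrightarrow> d < 11
  \<Longrightarrow> th 11 a * (th 11 b * (th 11 c * th 11 d)) = ls UNIV (E4 a b c d 0) ws"
  using th4[of a b c d 0] by simp

lemma I1: "Pq 2 * Pq 3 * Pq 4 ^ 2 - fps_X * Pq 1 * Pq 2 * Pq 3 ^ 2 = Pq 1 * Pq 4 * Pq 5 ^ 2"
proof -
  have "Pq 2 * Pq 3 * Pq 4 ^ 2 - fps_X * Pq 1 * Pq 2 * Pq 3 ^ 2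
      = th 11 2 * (th 11 3 * (th 11 4 * th 11 4)) - fps_X ^ 1 * (th 11 1 * (th 11 2 * (th 11 3 * th 11 3)))"
    by (simp add: Pq_th power2_eq_square mult_ac)
  also have "\<dots> = ls UNIV (E4 2 3 4 4 0) ws - ls UNIV (E4 1 2 3 3 1) ws"
    using th4'[of 2 3 4 4] th4[of 1 2 3 3 1] by simp
  also have "\<dots> = ls UNIV (E4 1 4 5 5 0) ws" by (rule id_I1)
  also have "\<dots> = Pq 1 * Pq 4 * Pq 5 ^ 2"
    using th4'[of 1 4 5 5] by (simp add: Pq_th power2_eq_square mult_ac)
  finally show ?thesis .
qed

lemma I2: "Pq 2 ^ 2 * Pq 3 * Pq 5 - Pq 1 * Pq 3 * Pq 4 ^ 2 = fps_X * Pq 1 ^ 2 * Pq 2 * Pq 5"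
proof -
  have "Pq 2 ^ 2 * Pq 3 * Pq 5 - Pq 1 * Pq 3 * Pq 4 ^ 2
      = th 11 2 * (th 11 2 * (th 11 3 * th 11 5)) - th 11 1 * (th 11 3 * (th 11 4 * th 11 4))"
    by (simp add: Pq_th power2_eq_square mult_ac)
  also have "\<dots> = ls UNIV (E4 2 2 3 5 0) ws - ls UNIV (E4 1 3 4 4 0) ws"
    using th4'[of 2 2 3 5] th4'[of 1 3 4 4] by simp
  also have "\<dots> = ls UNIV (E4 1 1 2 5 1) ws" by (rule id_I2)
  also have "\<dots> = fps_X ^ 1 * (th 11 1 * (th 11 1 * (th 11 2 * th 11 5)))"
    using th4[of 1 1 2 5 1] by simp
  also have "\<dots> = fps_X * Pq 1 ^ 2 * Pq 2 * Pq 5"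
    by (simp add: Pq_th power2_eq_square mult_ac)
  finally show ?thesis .
qed

lemma I3: "Pq 3 ^ 2 * Pq 4 * Pq 5 - Pq 2 * Pq 4 * Pq 5 ^ 2 = fps_X ^ 2 * Pq 1 ^ 2 * Pq 2 * Pq 3"
proof -
  have "Pq 3 ^ 2 * Pq 4 * Pq 5 - Pq 2 * Pq 4 * Pq 5 ^ 2
      = th 11 3 * (th 11 3 * (th 11 4 * th 11 5)) - th 11 2 * (th 11 4 * (th 11 5 * th 11 5))"
    by (simp add: Pq_th power2_eq_square mult_ac)
  also have "\<dots> = ls UNIV (E4 3 3 4 5 0) ws - ls UNIV (E4 2 4 5 5 0) ws"
    using th4'[of 3 3 4 5] th4'[of 2 4 5 5] by simp
  also have "\<dots> = ls UNIV (E4 1 1 2 3 2) ws" by (rule id_I3)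
  also have "\<dots> = fps_X ^ 2 * (th 11 1 * (th 11 1 * (th 11 2 * th 11 3)))"
    using th4[of 1 1 2 3 2] by simp
  also have "\<dots> = fps_X ^ 2 * Pq 1 ^ 2 * Pq 2 * Pq 3"
    by (simp add: Pq_th power2_eq_square mult_ac)
  finally show ?thesis .
qed





lemma Pq_R: "Pq 1 = R 1 * R 10 * R 11" "Pq 2 = R 2 * R 9 * R 11" "Pq 3 = R 3 * R 8 * R 11"
  "Pq 4 = R 4 * R 7 * R 11" "Pq 5 = R 5 * R 6 * R 11"
  by (simp_all add: Pq_def Jam_def)

lemma RiR: "a \<ge> 1 \<Longrightarrow> R a * inverse (R a) = 1"
  by (rule inverse_mult_eq_1') (simp add: R0)

lemma Pq0: "a \<ge> 1 \<Longrightarrow> a \<le> 10 \<Longrightarrow> fps_nth (Pq a) 0 = 1"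
  by (simp add: Pq_def Jam_def R0)

lemma solve_unit: assumes h: "fps_nth (u::real fps) 0 \<noteq> 0" and e: "u * y = z" shows "y = inverse u * z"
proof -
  have "inverse u * z = (inverse u * u) * y" unfolding e[symmetric] by (simp only: mult.assoc)
  then show ?thesis by (simp add: inverse_mult_eq_1[OF h])
qed

lemma iJ1: "inverse (Jm 1) = inverse (R 1) * inverse (R 2) * inverse (R 3) * inverse (R 4) * inverse (R 5) *
   inverse (R 6) * inverse (R 7) * inverse (R 8) * inverse (R 9) * inverse (R 10) * inverse (R 11)"
  unfolding Jm_def J1_split fps_inverse_mult by (rule refl)

lemma J1_0: "fps_nth (Jm 1) 0 = 1"
  unfolding Jm_def qpoch_ip by (rule ip0[OF good_qp]) auto

lemma goal1: "nn (Jm 1 * bracket 0 0 1 0 0 - Jm 1 * bracket 0 1 0 0 0)"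
proof -
  define D where "D = Pq 4 ^ 2 - fps_X * Pq 1 * Pq 3"
  have a: "Jm 1 * bracket 0 0 1 0 0 - Jm 1 * bracket 0 1 0 0 0
      = Jm 11 ^ 2 * (Jm 1 * inverse (Jm 1)) * inverse (Jm 1) ^ 2 * fps_X * Pq 1 * D"
    unfolding bracket_def D_def fps_inverse_power by (simp add: algebra_simps power2_eq_square power3_eq_cube)
  have "(Pq 2 * Pq 3) * D = Pq 1 * Pq 4 * Pq 5 ^ 2" unfolding D_def using I1 by (simp add: algebra_simps power2_eq_square)
  then have b: "D = inverse (Pq 2) * inverse (Pq 3) * (Pq 1 * Pq 4 * Pq 5 ^ 2)"
    by (subst solve_unit[of "Pq 2 * Pq 3"]) (auto simp: Pq0 fps_inverse_mult)
  have c: "Jm 11 ^ 2 * inverse (Jm 1) ^ 2 * fps_X * Pq 1 * (inverse (Pq 2) * inverse (Pq 3) * (Pq 1 * Pq 4 * Pq 5 ^ 2))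
     = (R 1 * inverse (R 1)) ^ 2 * (R 4 * inverse (R 4)) * (R 5 * inverse (R 5)) ^ 2 * (R 6 * inverse (R 6)) ^ 2 *
       (R 7 * inverse (R 7)) * (R 10 * inverse (R 10)) ^ 2 * (R 11 * inverse (R 11)) ^ 4 *
       (fps_X * (Jo * inverse (R 2) * inverse (R 9)) * (Je * inverse (R 2) * inverse (R 9)) * (Jo * inverse (R 2) * inverse (R 9))
        * (Je * inverse (R 3) * inverse (R 8)) * (Jo * inverse (R 3) * inverse (R 8)) * (Je * inverse (R 3) * inverse (R 8))
        * inverse (R 4) * inverse (R 7))"
    unfolding iJ1 unfolding Pq_R fps_inverse_mult Jm_def J11_split
    by (simp only: mult_ac power2_eq_square power3_eq_cube power4_eq_xxxx)
  have "Jm 1 * bracket 0 0 1 0 0 - Jm 1 * bracket 0 1 0 0 0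
     = fps_X * (Jo * inverse (R 2) * inverse (R 9)) * (Je * inverse (R 2) * inverse (R 9)) * (Jo * inverse (R 2) * inverse (R 9))
        * (Je * inverse (R 3) * inverse (R 8)) * (Jo * inverse (R 3) * inverse (R 8)) * (Je * inverse (R 3) * inverse (R 8))
        * inverse (R 4) * inverse (R 7)"
  proof -
    have J1inv: "Jm 1 * inverse (Jm 1) = 1" by (rule inverse_mult_eq_1') (use J1_0 in simp)
    have u: "R 1 * inverse (R 1) = 1" "R 4 * inverse (R 4) = 1" "R 5 * inverse (R 5) = 1" "R 6 * inverse (R 6) = 1"
      "R 7 * inverse (R 7) = 1" "R 10 * inverse (R 10) = 1" "R 11 * inverse (R 11) = 1"
      by (rule RiR, simp)+
    show ?thesis unfolding a b J1inv mult_1_right c u power_one mult_1_left by (rule refl)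
  qed
  also have "nn \<dots>"
    by (intro nn_mult chain_odd chain_even nn_inv_R nn_X) auto
  finally show ?thesis .
qed

lemma J1inv: "Jm 1 * inverse (Jm 1) = 1" by (rule inverse_mult_eq_1') (use J1_0 in simp)

lemma goal2: "nn (Jm 1 * bracket 0 0 0 1 0 - Jm 1 * bracket 0 0 1 0 0)"
proof -
  define D where "D = Pq 2 ^ 2 * Pq 5 - Pq 1 * Pq 4 ^ 2"
  have a: "Jm 1 * bracket 0 0 0 1 0 - Jm 1 * bracket 0 0 1 0 0
      = Jm 11 ^ 2 * (Jm 1 * inverse (Jm 1)) * inverse (Jm 1) ^ 2 * fps_X * D"
    unfolding bracket_def D_def fps_inverse_power by (simp add: algebra_simps power2_eq_square power3_eq_cube)
  have "Pq 3 * D = fps_X * Pq 1 ^ 2 * Pq 2 * Pq 5" unfolding D_def using I2 by (simp add: algebra_simps power2_eq_square)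
  then have b: "D = inverse (Pq 3) * (fps_X * Pq 1 ^ 2 * Pq 2 * Pq 5)"
    by (subst solve_unit[of "Pq 3"]) (auto simp: Pq0)
  have c: "Jm 11 ^ 2 * inverse (Jm 1) ^ 2 * fps_X * (inverse (Pq 3) * (fps_X * Pq 1 ^ 2 * Pq 2 * Pq 5))
     = (R 1 * inverse (R 1)) ^ 2 * (R 10 * inverse (R 10)) ^ 2 * (R 2 * inverse (R 2)) * (R 9 * inverse (R 9)) *
       (R 5 * inverse (R 5)) * (R 6 * inverse (R 6)) * (R 11 * inverse (R 11)) ^ 3 *
       (fps_X ^ 2 * (Jo * inverse (R 3) * inverse (R 8)) * (Je * inverse (R 3) * inverse (R 8)) * (Jo * inverse (R 3) * inverse (R 8))
        * (Je * inverse (R 4) * inverse (R 7)) * (Jo * inverse (R 4) * inverse (R 7)) * (Je * inverse (R 2) * inverse (R 9))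
        * inverse (R 5) * inverse (R 6))"
    unfolding iJ1 unfolding Pq_R fps_inverse_mult Jm_def J11_split
    by (simp only: mult_ac power2_eq_square power3_eq_cube power4_eq_xxxx)
  have "Jm 1 * bracket 0 0 0 1 0 - Jm 1 * bracket 0 0 1 0 0
     = fps_X ^ 2 * (Jo * inverse (R 3) * inverse (R 8)) * (Je * inverse (R 3) * inverse (R 8)) * (Jo * inverse (R 3) * inverse (R 8))
        * (Je * inverse (R 4) * inverse (R 7)) * (Jo * inverse (R 4) * inverse (R 7)) * (Je * inverse (R 2) * inverse (R 9))
        * inverse (R 5) * inverse (R 6)"
  proof -
    have u: "R 1 * inverse (R 1) = 1" "R 2 * inverse (R 2) = 1" "R 5 * inverse (R 5) = 1" "R 6 * inverse (R 6) = 1"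
      "R 9 * inverse (R 9) = 1" "R 10 * inverse (R 10) = 1" "R 11 * inverse (R 11) = 1"
      by (rule RiR, simp)+
    show ?thesis unfolding a b J1inv mult_1_right c u power_one mult_1_left by (rule refl)
  qed
  also have "nn \<dots>"
    by (intro nn_mult chain_odd chain_even nn_inv_R nn_X nn_pow) auto
  finally show ?thesis .
qed

lemma goal3: "nn (Jm 1 * bracket 0 0 0 0 1 - Jm 1 * bracket 0 0 0 1 0)"
proof -
  define D where "D = Pq 3 ^ 2 - Pq 2 * Pq 5"
  have a: "Jm 1 * bracket 0 0 0 0 1 - Jm 1 * bracket 0 0 0 1 0
      = Jm 11 ^ 2 * (Jm 1 * inverse (Jm 1)) * inverse (Jm 1) ^ 2 * fps_X * Pq 2 * D"
    unfolding bracket_def D_def fps_inverse_power by (simp add: algebra_simps power2_eq_square power3_eq_cube)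
  have "(Pq 4 * Pq 5) * D = fps_X ^ 2 * Pq 1 ^ 2 * Pq 2 * Pq 3" unfolding D_def using I3 by (simp add: algebra_simps power2_eq_square)
  then have b: "D = inverse (Pq 4) * inverse (Pq 5) * (fps_X ^ 2 * Pq 1 ^ 2 * Pq 2 * Pq 3)"
    by (subst solve_unit[of "Pq 4 * Pq 5"]) (auto simp: Pq0 fps_inverse_mult)
  have c: "Jm 11 ^ 2 * inverse (Jm 1) ^ 2 * fps_X * Pq 2 * (inverse (Pq 4) * inverse (Pq 5) * (fps_X ^ 2 * Pq 1 ^ 2 * Pq 2 * Pq 3))
     = (R 1 * inverse (R 1)) ^ 2 * (R 10 * inverse (R 10)) ^ 2 * (R 2 * inverse (R 2)) ^ 2 * (R 9 * inverse (R 9)) ^ 2 *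
       (R 3 * inverse (R 3)) * (R 8 * inverse (R 8)) * (R 11 * inverse (R 11)) ^ 4 *
       (fps_X ^ 3 * (Jo * inverse (R 4) * inverse (R 7)) * (Je * inverse (R 4) * inverse (R 7)) * (Jo * inverse (R 4) * inverse (R 7))
        * (Je * inverse (R 5) * inverse (R 6)) * (Jo * inverse (R 5) * inverse (R 6)) * (Je * inverse (R 5) * inverse (R 6))
        * inverse (R 3) * inverse (R 8))"
    unfolding iJ1 unfolding Pq_R fps_inverse_mult Jm_def J11_split
    by (simp only: mult_ac power2_eq_square power3_eq_cube power4_eq_xxxx)
  have "Jm 1 * bracket 0 0 0 0 1 - Jm 1 * bracket 0 0 0 1 0
     = fps_X ^ 3 * (Jo * inverse (R 4) * inverse (R 7)) * (Je * inverse (R 4) * inverse (R 7)) * (Jo * inverse (R 4) * inverse (R 7))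
        * (Je * inverse (R 5) * inverse (R 6)) * (Jo * inverse (R 5) * inverse (R 6)) * (Je * inverse (R 5) * inverse (R 6))
        * inverse (R 3) * inverse (R 8)"
  proof -
    have u: "R 1 * inverse (R 1) = 1" "R 2 * inverse (R 2) = 1" "R 3 * inverse (R 3) = 1" "R 8 * inverse (R 8) = 1"
      "R 9 * inverse (R 9) = 1" "R 10 * inverse (R 10) = 1" "R 11 * inverse (R 11) = 1"
      by (rule RiR, simp)+
    show ?thesis unfolding a b J1inv mult_1_right c u power_one mult_1_left by (rule refl)
  qed
  also have "nn \<dots>"
    by (intro nn_mult chain_odd chain_even nn_inv_R nn_X nn_pow) auto
  finally show ?thesis .
qed

lemma nn_iJ1: "nn (inverse (Jm 1))"
proof -
  have g: "good (\<lambda>i. 1 - fps_X ^ (1 + 1 * i))" by (rule good_qp) auto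
  show ?thesis unfolding Jm_def qpoch_ip ip_inverse[OF g]
    by (rule ip_nn, rule nn_inv_geo) simp
qed

lemma div_J1: "nn (Jm 1 * B - Jm 1 * A) \<Longrightarrow> nn (B - A)"
proof -
  assume h: "nn (Jm 1 * B - Jm 1 * A)"
  have "B - A = inverse (Jm 1) * (Jm 1 * B - Jm 1 * A)"
    using J1inv by (simp add: algebra_simps)
  then show ?thesis using nn_mult[OF nn_iJ1 h] by simp
qed

theorem proposition6p3:
  shows "fps_coeff_le (Jm 1 * bracket 0 1 0 0 0) (Jm 1 * bracket 0 0 1 0 0)
       \<and> fps_coeff_le (Jm 1 * bracket 0 0 1 0 0) (Jm 1 * bracket 0 0 0 1 0)
       \<and> fps_coeff_le (Jm 1 * bracket 0 0 0 1 0) (Jm 1 * bracket 0 0 0 0 1)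
       \<and> fps_coeff_le (bracket 0 1 0 0 0) (bracket 0 0 1 0 0)
       \<and> fps_coeff_le (bracket 0 0 1 0 0) (bracket 0 0 0 1 0)
       \<and> fps_coeff_le (bracket 0 0 0 1 0) (bracket 0 0 0 0 1)"
  using goal1 goal2 goal3 div_J1[OF goal1] div_J1[OF goal2] div_J1[OF goal3]
  unfolding fps_coeff_le_def nn_def by blast


end
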